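(* Let $(\varepsilon_n)_{n\ge1}$ with $\varepsilon_n\downarrow0$, and $(\alpha_n)_{n\ge1}$ with $\alpha_n\in K$ for a compact $K\subset\mathcal A$, be arbitrary sequences. Then for each $h\in\mathcal H$ the sequence of measures $(P^{\varepsilon_n,h}_{\alpha_n})$ is contiguous to the sequence $(P^{\varepsilon_n}_{\alpha_n})$.
   Context: Fix $t>0$ and an open set $\mathcal A\subset\mathbb R^m$. Let $C_t$ be the space of continuous functions on $[0,t]$ with $\mathcal B_s=\sigma(x_u,u\le s)$, and $X$ the coordinate process. Let $a:[0,t]\times C_t\times\mathcal A\to\mathbb R$ be nonanticipative and satisfy, with constants $L_1,L_2$ independent of $\alpha$ and a nondecreasing right-continuous bounded $k\ge0$: $|a(s,x^1;\alpha)-a(s,x^2;\alpha)|\le L_1\int_0^s|x^1_u-x^2_u|dk_u+L_2|x^1_s-x^2_s|$, $|a(s,x;\alpha)|\le L_1\int_0^s(1+|x_u|)dk_u+L_2(1+|x_s|)$. Let $Y^0(\alpha)$ solve $dY_s=a(s,Y;\alpha)ds$, $Y_0=0$. For $\varepsilon>0$, $P^\varepsilon_\alpha$ is the law on $C_t$ of the solution of $dX_s=a_\varepsilon(s,X;\alpha)ds+dw_s$, $X_0=0$, where $a_\varepsilon(s,x;\alpha)=\varepsilon^{-1}a(s,\varepsilon x;\alpha)$. $\mathcal H$ is the family of bounded nonanticipative $h:[0,t]\times C_t\times\mathcal A\to\mathbb R$ such that for every $s,\alpha$, $h(s,\cdot;\alpha)$ is continuous at $Y^0(\alpha)$. For $h\in\mathcal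 H$, $P^{\varepsilon,h}_\alpha$ is the measure on $(C_t,\mathcal B_t)$ with $P^{\varepsilon,h}_\alpha\sim P^\varepsilon_\alpha$ and $dP^{\varepsilon,h}_\alpha/dP^\varepsilon_\alpha=\mathcal E_t(\varepsilon N^{\varepsilon,h}_\alpha)$ (Doléans exponential), where $N^{\varepsilon,h}_{\alpha,s}=\int_0^s h_\varepsilon(u,X;\alpha)(dX_u-a_\varepsilon(u,X;\alpha)du)$ and $h_\varepsilon(s,x;\alpha)=\varepsilon^{-1}h(s,\varepsilon x;\alpha)$. *)

theory Defs
  imports "HOL-Probability.Probability"
begin

definition Cpath :: "real \<Rightarrow> (real \<Rightarrow> real) set" where
  "Cpath t = {x. continuous_on {0..t} x \<and> (\<forall>u. u \<notin> {0..t} \<longrightarrow> x u = 0)}"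

definition restr_path :: "real \<Rightarrow> (real \<Rightarrow> real) \<Rightarrow> (real \<Rightarrow> real)" where
  "restr_path t x = (\<lambda>u. if u \<in> {0..t} then x u else 0)"

definition Bsig :: "real \<Rightarrow> real \<Rightarrow> (real \<Rightarrow> real) measure" where
  "Bsig t s = sigma (Cpath t)
     {{x \<in> Cpath t. x u \<in> A} | u A. u \<in> {0..s} \<and> A \<in> sets borel}"

definition nonanticipative ::
  "real \<Rightarrow> 'a set \<Rightarrow> (real \<Rightarrow> (real \<Rightarrow> real) \<Rightarrow> 'a \<Rightarrow> real) \<Rightarrow> bool" where
  "nonanticipative t \<A> a \<longleftrightarrow>
     (\<forall>\<alpha>\<in>\<A>. \<forall>s\<in>{0..t}.
        (\<lambda>(u, x). a u x \<alpha>) \<in>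
          borel_measurable (restrict_space borel {0..s} \<Otimes>\<^sub>M Bsig t s))"

definition scaled ::
  "real \<Rightarrow> (real \<Rightarrow> (real \<Rightarrow> real) \<Rightarrow> 'a \<Rightarrow> real) \<Rightarrow> real \<Rightarrow> (real \<Rightarrow> real) \<Rightarrow> 'a \<Rightarrow> real" where
  "scaled \<epsilon> a s x \<alpha> = a s (\<lambda>u. \<epsilon> * x u) \<alpha> / \<epsilon>"

definition ode_solution ::
  "real \<Rightarrow> (real \<Rightarrow> (real \<Rightarrow> real) \<Rightarrow> 'a \<Rightarrow> real) \<Rightarrow> 'a \<Rightarrow> (real \<Rightarrow> real) \<Rightarrow> bool" where
  "ode_solution t a \<alpha> Y \<longleftrightarrow> Y \<in> Cpath t \<and>
     (\<forall>s\<in>{0..t}. set_integrable lborel {0..s} (\<lambda>u. a u Y \<alpha>) \<and>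
                  Y s = (LINT u:{0..s}|lborel. a u Y \<alpha>))"

definition classH ::
  "real \<Rightarrow> 'a set \<Rightarrow> ('a \<Rightarrow> real \<Rightarrow> real) \<Rightarrow> (real \<Rightarrow> (real \<Rightarrow> real) \<Rightarrow> 'a \<Rightarrow> real) \<Rightarrow> bool" where
  "classH t \<A> Y0 h \<longleftrightarrow>
     (\<exists>B. \<forall>s\<in>{0..t}. \<forall>x\<in>Cpath t. \<forall>\<alpha>\<in>\<A>. \<bar>h s x \<alpha>\<bar> \<le> B) \<and>
     nonanticipative t \<A> h \<and>
     (\<forall>s\<in>{0..t}. \<forall>\<alpha>\<in>\<A>. \<forall>e>0. \<exists>\<delta>>0. \<forall>x\<in>Cpath t.
        (\<forall>u\<in>{0..t}. \<bar>x u - Y0 \<alpha> u\<bar> < \<delta>) \<longrightarrow> \<bar>h s x \<alpha> - h s (Y0 \<alpha>) \<alpha>\<bar> < e)"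

definition brownian_motion :: "'w measure \<Rightarrow> real \<Rightarrow> (real \<Rightarrow> 'w \<Rightarrow> real) \<Rightarrow> bool" where
  "brownian_motion M t w \<longleftrightarrow> prob_space M \<and>
     (\<forall>s\<in>{0..t}. w s \<in> borel_measurable M) \<and>
     (\<forall>\<omega>\<in>space M. w 0 \<omega> = 0 \<and> continuous_on {0..t} (\<lambda>s. w s \<omega>)) \<and>
     (\<forall>m (p::nat \<Rightarrow> real). p 0 \<ge> 0 \<and> p m \<le> t \<and> (\<forall>i<m. p i < p (Suc i)) \<longrightarrow>
        prob_space.indep_vars M (\<lambda>_. borel) (\<lambda>i \<omega>. w (p (Suc i)) \<omega> - w (p i) \<omega>) {..<m} \<and>
        (\<forall>i<m. distributed M lborel (\<lambda>\<omega>. w (p (Suc i)) \<omega> - w (p i) \<omega>)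
                  (\<lambda>y. ennreal (normal_density 0 (sqrt (p (Suc i) - p i)) y))))"

definition sde_solution ::
  "'w measure \<Rightarrow> real \<Rightarrow> (real \<Rightarrow> (real \<Rightarrow> real) \<Rightarrow> real) \<Rightarrow> (real \<Rightarrow> 'w \<Rightarrow> real)
     \<Rightarrow> (real \<Rightarrow> 'w \<Rightarrow> real) \<Rightarrow> bool" where
  "sde_solution M t b w X \<longleftrightarrow>
     (\<forall>s\<in>{0..t}. X s \<in> borel_measurable M) \<and>
     (\<forall>\<omega>\<in>space M. continuous_on {0..t} (\<lambda>s. X s \<omega>) \<and>
        (\<forall>s\<in>{0..t}.
           set_integrable lborel {0..s} (\<lambda>u. b u (restr_path t (\<lambda>r. X r \<omega>))) \<and>
           X s \<omega> = (LINT u:{0..s}|lborel. b u (restr_path t (\<lambda>r. X r \<omega>))) + w s \<omega>))"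

definition path_law :: "'w measure \<Rightarrow> real \<Rightarrow> (real \<Rightarrow> 'w \<Rightarrow> real) \<Rightarrow> (real \<Rightarrow> real) measure" where
  "path_law M t X = distr M (Bsig t t) (\<lambda>\<omega>. restr_path t (\<lambda>r. X r \<omega>))"

definition simple_integrand ::
  "'w measure \<Rightarrow> (real \<Rightarrow> 'w measure) \<Rightarrow> real \<Rightarrow> nat \<Rightarrow> (nat \<Rightarrow> real) \<Rightarrow> (nat \<Rightarrow> 'w \<Rightarrow> real) \<Rightarrow> bool" where
  "simple_integrand M F T m p \<xi> \<longleftrightarrow> p 0 = 0 \<and> p m = T \<and> (\<forall>i<m. p i < p (Suc i)) \<and>
     (\<forall>i<m. \<xi> i \<in> borel_measurable (F (p i)) \<and> (\<exists>B. \<forall>\<omega>\<in>space M. \<bar>\<xi> i \<omega>\<bar> \<le> B))"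

definition simple_process :: "nat \<Rightarrow> (nat \<Rightarrow> real) \<Rightarrow> (nat \<Rightarrow> 'w \<Rightarrow> real) \<Rightarrow> real \<Rightarrow> 'w \<Rightarrow> real" where
  "simple_process m p \<xi> s \<omega> = (\<Sum>i<m. \<xi> i \<omega> * indicator {p i<..p (Suc i)} s)"

definition simple_stoch_int ::
  "nat \<Rightarrow> (nat \<Rightarrow> real) \<Rightarrow> (nat \<Rightarrow> 'w \<Rightarrow> real) \<Rightarrow> (real \<Rightarrow> 'w \<Rightarrow> real) \<Rightarrow> 'w \<Rightarrow> real" where
  "simple_stoch_int m p \<xi> W \<omega> = (\<Sum>i<m. \<xi> i \<omega> * (W (p (Suc i)) \<omega> - W (p i) \<omega>))"

definition is_ito_integral ::
  "'w measure \<Rightarrow> (real \<Rightarrow> 'w measure) \<Rightarrow> real \<Rightarrow> (real \<Rightarrow> 'w \<Rightarrow> real) \<Rightarrow> (real \<Rightarrow> 'w \<Rightarrow> real)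
     \<Rightarrow> ('w \<Rightarrow> real) \<Rightarrow> bool" where
  "is_ito_integral M F T W H Z \<longleftrightarrow> Z \<in> borel_measurable M \<and>
     (\<exists>m p \<xi>. (\<forall>n. simple_integrand M F T (m n) (p n) (\<xi> n)) \<and>
        ((\<lambda>n. \<integral>\<^sup>+ \<omega>. (\<integral>\<^sup>+ s. indicator {0..T} s *
              ennreal ((H s \<omega> - simple_process (m n) (p n) (\<xi> n) s \<omega>)\<^sup>2) \<partial>lborel) \<partial>M)
           \<longlonglongrightarrow> 0) \<and>
        ((\<lambda>n. \<integral>\<^sup>+ \<omega>. ennreal ((Z \<omega> - simple_stoch_int (m n) (p n) (\<xi> n) W \<omega>)\<^sup>2) \<partial>M)
           \<longlonglongrightarrow> 0))"

definition contiguous :: "(nat \<Rightarrow> 'b measure) \<Rightarrow> (nat \<Rightarrow> 'b measure) \<Rightarrow> bool" where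
  "contiguous Q P \<longleftrightarrow>
     (\<forall>A. (\<forall>n. A n \<in> sets (P n)) \<longrightarrow>
        (\<lambda>n. emeasure (P n) (A n)) \<longlonglongrightarrow> 0 \<longrightarrow>
        (\<lambda>n. emeasure (Q n) (A n)) \<longlonglongrightarrow> 0)"

end

theory Submission
  imports Defs
begin

lemma gauss_mgf:
  fixes \<sigma> c :: real
  assumes "\<sigma> > 0"
  shows "(\<integral>\<^sup>+y. ennreal (normal_density 0 \<sigma> y * exp (c*y - c\<^sup>2*\<sigma>\<^sup>2/2)) \<partial>lborel) = 1"
proof -
  have eq: "normal_density 0 \<sigma> y * exp (c*y - c\<^sup>2*\<sigma>\<^sup>2/2) = normal_density (c*\<sigma>\<^sup>2) \<sigma> y" for y
  proof -
    have "-(y - 0)\<^sup>2/ (2 * \<sigma>\<^sup>2) + (c*y - c\<^sup>2*\<sigma>\<^sup>2/2) = -(y - c*\<sigma>\<^sup>2)\<^sup>2/ (2 * \<sigma>\<^sup>2)"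
      using assms by (simp add: field_simps power2_eq_square)
    then show ?thesis unfolding normal_density_def
      using assms by (simp add: exp_add[symmetric])
  qed
  interpret prob_space "density lborel (\<lambda>x. ennreal (normal_density (c*\<sigma>\<^sup>2) \<sigma> x))"
    using assms by (rule prob_space_normal_density)
  have "emeasure (density lborel (\<lambda>x. ennreal (normal_density (c*\<sigma>\<^sup>2) \<sigma> x))) UNIV = 1"
    using emeasure_space_1 by simp
  then show ?thesis
    by (simp add: eq emeasure_density)
qed

lemma meas_sub:
  assumes "f \<in> measurable F N" "space F = space P" "sets F \<subseteq> sets P"
  shows "f \<in> measurable P N"
  using assms unfolding measurable_def by auto

lemma indep_step:
  fixes P F :: "'x measure" and Y G \<xi> :: "'x \<Rightarrow> real"
  assumes P: "prob_space P"
    and Fsp: "space F = space P" and Fs: "sets F \<subseteq> sets P"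
    and Ym: "Y \<in> borel_measurable P"
    and ind: "\<And>A C. A \<in> sets F \<Longrightarrow> C \<in> sets borel \<Longrightarrow>
       measure P (A \<inter> (Y -` C \<inter> space P)) = measure P A * measure P (Y -` C \<inter> space P)"
    and dist: "distr P lborel Y = density lborel (\<lambda>y. ennreal (normal_density 0 \<sigma> y))"
    and \<sigma>: "\<sigma> > 0"
    and Gm: "G \<in> borel_measurable F" and Gnn: "\<And>x. x\<in>space P \<Longrightarrow> G x \<ge> 0"
    and \<xi>m: "\<xi> \<in> borel_measurable F"
  shows "(\<integral>\<^sup>+x. ennreal (G x * exp (c * \<xi> x * Y x - c\<^sup>2 * (\<xi> x)\<^sup>2 * \<sigma>\<^sup>2 / 2)) \<partial>P)
         = (\<integral>\<^sup>+x. ennreal (G x) \<partial>P)"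
proof -
  interpret prob_space P by fact
  define V where "V = (\<lambda>x. (G x, \<xi> x))"
  let ?S = "borel \<Otimes>\<^sub>M borel :: (real \<times> real) measure"
  have VF: "V \<in> measurable F ?S" unfolding V_def using Gm \<xi>m by measurable
  have VP: "V \<in> measurable P ?S" by (rule meas_sub[OF VF Fsp Fs])
  have YP: "Y \<in> measurable P lborel" using Ym by simp
  interpret DV: prob_space "distr P ?S V" by (rule prob_space_distr[OF VP])
  interpret DY: prob_space "distr P lborel Y" by (rule prob_space_distr[OF YP])
  interpret DVY: pair_prob_space "distr P ?S V" "distr P lborel Y" ..
  have VYP: "(\<lambda>x. (V x, Y x)) \<in> measurable P (?S \<Otimes>\<^sub>M lborel)" using VP YP by (rule measurable_Pair)
  have deq: "distr P ?S V \<Otimes>\<^sub>M distr P lborel Y = distr P (?S \<Otimes>\<^sub>M lborel) (\<lambda>x. (V x, Y x))"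
  proof (rule pair_measure_eqI)
    show "sigma_finite_measure (distr P ?S V)" ..
    show "sigma_finite_measure (distr P lborel Y)" ..
    show "sets (distr P ?S V \<Otimes>\<^sub>M distr P lborel Y) = sets (distr P (?S \<Otimes>\<^sub>M lborel) (\<lambda>x. (V x, Y x)))"
      by simp
    fix A B assume A: "A \<in> sets (distr P ?S V)" and B: "B \<in> sets (distr P lborel Y)"
    have AF: "V -` A \<inter> space P \<in> sets F"
      using measurable_sets[OF VF, of A] A Fsp by simp
    have "emeasure (distr P (?S \<Otimes>\<^sub>M lborel) (\<lambda>x. (V x, Y x))) (A \<times> B)
        = emeasure P ((\<lambda>x. (V x, Y x)) -` (A \<times> B) \<inter> space P)"
      using A B by (intro emeasure_distr[OF VYP]) auto
    also have "(\<lambda>x. (V x, Y x)) -` (A \<times> B) \<inter> space P = (V -` A \<inter> space P) \<inter> (Y -` B \<inter> space P)"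
      by auto
    also have "emeasure P \<dots> = emeasure P (V -` A \<inter> space P) * emeasure P (Y -` B \<inter> space P)"
      using ind[OF AF, of B] B by (simp add: emeasure_eq_measure measure_nonneg ennreal_mult)
    also have "\<dots> = emeasure (distr P ?S V) A * emeasure (distr P lborel Y) B"
      using A B by (simp add: emeasure_distr[OF VP] emeasure_distr[OF YP])
    finally show "emeasure (distr P ?S V) A * emeasure (distr P lborel Y) B =
       emeasure (distr P (?S \<Otimes>\<^sub>M lborel) (\<lambda>x. (V x, Y x))) (A \<times> B)" by simp
  qed
  define \<phi> where "\<phi> = (\<lambda>z::(real\<times>real)\<times>real. ennreal (fst (fst z) * exp (c * snd (fst z) * snd z - c\<^sup>2 * (snd (fst z))\<^sup>2 * \<sigma>\<^sup>2 / 2)))"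
  have \<phi>m: "\<phi> \<in> borel_measurable (?S \<Otimes>\<^sub>M lborel)" unfolding \<phi>_def by measurable
  have "(\<integral>\<^sup>+x. ennreal (G x * exp (c * \<xi> x * Y x - c\<^sup>2 * (\<xi> x)\<^sup>2 * \<sigma>\<^sup>2 / 2)) \<partial>P)
      = (\<integral>\<^sup>+x. \<phi> (V x, Y x) \<partial>P)" unfolding \<phi>_def V_def by simp
  also have "\<dots> = (\<integral>\<^sup>+z. \<phi> z \<partial>distr P (?S \<Otimes>\<^sub>M lborel) (\<lambda>x. (V x, Y x)))"
    by (rule nn_integral_distr[symmetric]) (use VP YP \<phi>m in auto)
  also have "\<dots> = (\<integral>\<^sup>+z. \<phi> z \<partial>(distr P ?S V \<Otimes>\<^sub>M distr P lborel Y))" by (simp add: deq)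
  also have "\<dots> = (\<integral>\<^sup>+v. \<integral>\<^sup>+y. \<phi> (v,y) \<partial>distr P lborel Y \<partial>distr P ?S V)"
    by (rule DY.nn_integral_fst[symmetric]) (use \<phi>m in simp)
  also have "\<dots> = (\<integral>\<^sup>+v. ennreal (fst v) \<partial>distr P ?S V)"
  proof (rule nn_integral_cong)
    fix v :: "real \<times> real"
    have "(\<integral>\<^sup>+y. \<phi> (v,y) \<partial>distr P lborel Y)
        = (\<integral>\<^sup>+y. ennreal (normal_density 0 \<sigma> y) * \<phi> (v,y) \<partial>lborel)"
      unfolding dist apply (rule nn_integral_density) apply simp unfolding \<phi>_def by simp
    also have "\<dots> = (\<integral>\<^sup>+y. ennreal (fst v) * ennreal (normal_density 0 \<sigma> y * exp (c * snd v * y - (c * snd v)\<^sup>2 * \<sigma>\<^sup>2 / 2)) \<partial>lborel)"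
      unfolding \<phi>_def
      by (intro nn_integral_cong)
         (simp add: ennreal_mult'[symmetric] normal_density_nonneg power_mult_distrib ac_simps,
          rule ennreal_mult'', simp add: normal_density_nonneg)
    also have "\<dots> = ennreal (fst v) * (\<integral>\<^sup>+y. ennreal (normal_density 0 \<sigma> y * exp (c * snd v * y - (c * snd v)\<^sup>2 * \<sigma>\<^sup>2 / 2)) \<partial>lborel)"
      by (rule nn_integral_cmult) simp
    also have "\<dots> = ennreal (fst v)" using gauss_mgf[OF \<sigma>] by simp
    finally show "(\<integral>\<^sup>+y. \<phi> (v,y) \<partial>distr P lborel Y) = ennreal (fst v)" .
  qed
  also have "\<dots> = (\<integral>\<^sup>+x. ennreal (G x) \<partial>P)"
    by (subst nn_integral_distr[OF VP]) (simp_all add: V_def)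
  finally show ?thesis .
qed


lemma strict_inc_le:
  fixes p :: "nat \<Rightarrow> real"
  assumes "\<forall>i<m. p i < p (Suc i)" "i \<le> j" "j \<le> m"
  shows "p i \<le> p j"
  using assms(2,3)
proof (induction j)
  case 0 then show ?case by simp
next
  case (Suc j)
  show ?case
  proof (cases "i = Suc j")
    case True then show ?thesis by simp
  next
    case False
    then have "i \<le> j" using Suc by simp
    then have "p i \<le> p j" using Suc by simp
    also have "p j < p (Suc j)" using assms(1) Suc by simp
    finally show ?thesis by simp
  qed
qed

lemma simple_exp_mart:
  fixes P :: "'x measure" and Fm :: "real \<Rightarrow> 'x measure" and W :: "real \<Rightarrow> 'x \<Rightarrow> real"
  assumes P: "prob_space P"
    and Fsp: "\<And>s. 0 \<le> s \<Longrightarrow> s \<le> T \<Longrightarrow> space (Fm s) = space P"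
    and Fmono: "\<And>s s'. 0 \<le> s \<Longrightarrow> s \<le> s' \<Longrightarrow> s' \<le> T \<Longrightarrow> sets (Fm s) \<subseteq> sets (Fm s')"
    and FP: "sets (Fm T) \<subseteq> sets P"
    and Wm: "\<And>s. 0 \<le> s \<Longrightarrow> s \<le> T \<Longrightarrow> W s \<in> borel_measurable (Fm s)"
    and ind: "\<And>p q A C. 0 \<le> p \<Longrightarrow> p < q \<Longrightarrow> q \<le> T \<Longrightarrow> A \<in> sets (Fm p) \<Longrightarrow> C \<in> sets borel \<Longrightarrow>
        measure P (A \<inter> ((\<lambda>x. W q x - W p x) -` C \<inter> space P))
          = measure P A * measure P ((\<lambda>x. W q x - W p x) -` C \<inter> space P)"
    and dist: "\<And>p q. 0 \<le> p \<Longrightarrow> p < q \<Longrightarrow> q \<le> T \<Longrightarrow>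
        distr P lborel (\<lambda>x. W q x - W p x) = density lborel (\<lambda>y. ennreal (normal_density 0 (sqrt (q - p)) y))"
    and si: "simple_integrand P Fm T m p \<xi>"
  shows "(\<integral>\<^sup>+x. ennreal (exp (c * simple_stoch_int m p \<xi> W x
            - c\<^sup>2/2 * (\<Sum>i<m. (\<xi> i x)\<^sup>2 * (p (Suc i) - p i)))) \<partial>P) = 1"
proof -
  interpret prob_space P by fact
  have p0: "p 0 = 0" and pm: "p m = T" and pinc: "\<forall>i<m. p i < p (Suc i)"
    and \<xi>m: "\<And>i. i < m \<Longrightarrow> \<xi> i \<in> borel_measurable (Fm (p i))"
    using si unfolding simple_integrand_def by auto
  have ple: "\<And>i j. i \<le> j \<Longrightarrow> j \<le> m \<Longrightarrow> p i \<le> p j" using strict_inc_le[OF pinc] by blast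
  have prange: "\<And>i. i \<le> m \<Longrightarrow> 0 \<le> p i \<and> p i \<le> T"
    using ple[of 0] ple[of _ m] p0 pm by auto
  have toP: "f \<in> borel_measurable P" if "f \<in> borel_measurable (Fm s)" "0 \<le> s" "s \<le> T" for f s
    using meas_sub[OF that(1) Fsp[OF that(2,3)]] Fmono[OF that(2,3) order_refl] FP that by auto
  have lift: "f \<in> borel_measurable (Fm s')" if "f \<in> borel_measurable (Fm s)" "0 \<le> s" "s \<le> s'" "s' \<le> T" for f s s'
    using meas_sub[OF that(1)] Fsp that Fmono[OF that(2,3,4)] by auto
  define E where "E j x = exp (c * (\<Sum>i<j. \<xi> i x * (W (p (Suc i)) x - W (p i) x))
            - c\<^sup>2/2 * (\<Sum>i<j. (\<xi> i x)\<^sup>2 * (p (Suc i) - p i)))" for j x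
  have main: "E j \<in> borel_measurable (Fm (p j)) \<and> (\<integral>\<^sup>+x. ennreal (E j x) \<partial>P) = 1" if "j \<le> m" for j
    using that
  proof (induction j)
    case 0
    have "E 0 = (\<lambda>x. 1)" by (simp add: E_def fun_eq_iff)
    then show ?case using emeasure_space_1 by simp
  next
    case (Suc j)
    then have jm: "j < m" by simp
    have IH: "E j \<in> borel_measurable (Fm (p j))" "(\<integral>\<^sup>+x. ennreal (E j x) \<partial>P) = 1"
      using Suc by auto
    have pj: "0 \<le> p j" "p j < p (Suc j)" "p (Suc j) \<le> T"
      using prange[of j] prange[of "Suc j"] pinc jm by auto
    define \<sigma> where "\<sigma> = sqrt (p (Suc j) - p j)"
    have \<sigma>: "\<sigma> > 0" "\<sigma>\<^sup>2 = p (Suc j) - p j" using pj by (auto simp: \<sigma>_def)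
    have Wsj: "W (p (Suc j)) \<in> borel_measurable P" "W (p j) \<in> borel_measurable P"
      using toP[OF Wm] pj by auto
    have eqE: "E (Suc j) x = E j x * exp (c * \<xi> j x * (W (p (Suc j)) x - W (p j) x) - c\<^sup>2 * (\<xi> j x)\<^sup>2 * \<sigma>\<^sup>2 / 2)" for x
      unfolding E_def \<sigma>(2) by (simp add: exp_add[symmetric] field_simps)
    have "(\<integral>\<^sup>+x. ennreal (E (Suc j) x) \<partial>P)
      = (\<integral>\<^sup>+x. ennreal (E j x * exp (c * \<xi> j x * (W (p (Suc j)) x - W (p j) x) - c\<^sup>2 * (\<xi> j x)\<^sup>2 * \<sigma>\<^sup>2 / 2)) \<partial>P)"
      by (simp add: eqE)
    also have "\<dots> = (\<integral>\<^sup>+x. ennreal (E j x) \<partial>P)"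
    proof (rule indep_step[OF P _ _ _ _ _ \<sigma>(1) IH(1) _ \<xi>m[OF jm]])
      show "space (Fm (p j)) = space P" using Fsp pj by auto
      show "sets (Fm (p j)) \<subseteq> sets P" using Fmono[of "p j" T] FP pj by auto
      show "(\<lambda>x. W (p (Suc j)) x - W (p j) x) \<in> borel_measurable P" using Wsj by measurable
      show "measure P (A \<inter> ((\<lambda>x. W (p (Suc j)) x - W (p j) x) -` C \<inter> space P)) =
          measure P A * measure P ((\<lambda>x. W (p (Suc j)) x - W (p j) x) -` C \<inter> space P)"
        if "A \<in> sets (Fm (p j))" "C \<in> sets borel" for A C
        using ind[OF pj that] .
      show "distr P lborel (\<lambda>x. W (p (Suc j)) x - W (p j) x) = density lborel (\<lambda>y. ennreal (normal_density 0 \<sigma> y))"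
        using dist[OF pj] by (simp add: \<sigma>_def)
      show "\<And>x. x \<in> space P \<Longrightarrow> 0 \<le> E j x" by (simp add: E_def)
    qed
    also have "\<dots> = 1" by (rule IH(2))
    finally have int: "(\<integral>\<^sup>+x. ennreal (E (Suc j) x) \<partial>P) = 1" .
    have m1: "E j \<in> borel_measurable (Fm (p (Suc j)))" using lift[OF IH(1)] pj by auto
    have m2: "\<xi> j \<in> borel_measurable (Fm (p (Suc j)))" using lift[OF \<xi>m[OF jm]] pj by auto
    have m3: "W (p (Suc j)) \<in> borel_measurable (Fm (p (Suc j)))" using Wm pj by auto
    have m4: "W (p j) \<in> borel_measurable (Fm (p (Suc j)))" using lift[OF Wm] pj by auto
    have "(\<lambda>x. E j x * exp (c * \<xi> j x * (W (p (Suc j)) x - W (p j) x) - c\<^sup>2 * (\<xi> j x)\<^sup>2 * \<sigma>\<^sup>2 / 2))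
       \<in> borel_measurable (Fm (p (Suc j)))" using m1 m2 m3 m4 by measurable
    then have "E (Suc j) \<in> borel_measurable (Fm (p (Suc j)))" by (simp add: eqE[abs_def])
    with int show ?case by simp
  qed
  have "E m = (\<lambda>x. exp (c * simple_stoch_int m p \<xi> W x
            - c\<^sup>2/2 * (\<Sum>i<m. (\<xi> i x)\<^sup>2 * (p (Suc i) - p i))))"
    by (simp add: E_def simple_stoch_int_def fun_eq_iff)
  with main[of m] show ?thesis by simp
qed


lemma ennreal_series_tendsto0:
  fixes a :: "nat \<Rightarrow> ennreal"
  assumes "(\<Sum>k. a k) \<noteq> \<top>"
  shows "a \<longlonglongrightarrow> 0"
proof -
  have fin: "a k \<noteq> \<top>" for k
  proof
    assume "a k = \<top>"
    moreover have "sum a {k} \<le> (\<Sum>k. a k)" by (rule sum_le_suminf[OF summableI]) auto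
    ultimately show False using assms by (simp add: top_unique)
  qed
  define b where "b k = enn2real (a k)" for k
  have ab: "a = (\<lambda>k. ennreal (b k))" using fin by (auto simp: b_def fun_eq_iff ennreal_enn2real_if)
  have "summable b" using assms unfolding ab by (intro summable_suminf_not_top) (auto simp: b_def)
  then have "b \<longlonglongrightarrow> 0" by (rule summable_LIMSEQ_zero)
  then have "(\<lambda>k. ennreal (b k)) \<longlonglongrightarrow> ennreal 0" by (rule tendsto_ennrealI)
  then show ?thesis unfolding ab by simp
qed

lemma nn_AE_subseq:
  fixes g :: "nat \<Rightarrow> 'a \<Rightarrow> ennreal"
  assumes gm: "\<And>n. g n \<in> borel_measurable M"
    and lim: "(\<lambda>n. \<integral>\<^sup>+x. g n x \<partial>M) \<longlonglongrightarrow> 0"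
  shows "\<exists>r. strict_mono r \<and> (AE x in M. (\<lambda>j. g (r j) x) \<longlonglongrightarrow> 0)"
proof -
  have "\<forall>k. \<exists>N. \<forall>n\<ge>N. (\<integral>\<^sup>+x. g n x \<partial>M) < ennreal ((1/2)^k)"
  proof
    fix k :: nat
    have "eventually (\<lambda>n. (\<integral>\<^sup>+x. g n x \<partial>M) < ennreal ((1/2)^k)) sequentially"
      by (rule order_tendstoD(2)[OF lim]) simp
    then show "\<exists>N. \<forall>n\<ge>N. (\<integral>\<^sup>+x. g n x \<partial>M) < ennreal ((1/2)^k)"
      by (simp add: eventually_sequentially)
  qed
  then obtain N where N: "\<And>k n. n \<ge> N k \<Longrightarrow> (\<integral>\<^sup>+x. g n x \<partial>M) < ennreal ((1/2)^k)"
    by metis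
  define r where "r k = k + (\<Sum>i\<le>k. N i)" for k
  have sm: "strict_mono r" unfolding strict_mono_Suc_iff r_def by simp
  have rN: "r k \<ge> N k" for k
  proof -
    have "N k \<le> (\<Sum>i\<le>k. N i)" by (rule member_le_sum) auto
    then show ?thesis by (simp add: r_def)
  qed
  have small: "(\<integral>\<^sup>+x. g (r k) x \<partial>M) \<le> ennreal ((1/2)^k)" for k
    using N[OF rN[of k]] by simp
  have "(\<integral>\<^sup>+x. (\<Sum>k. g (r k) x) \<partial>M) = (\<Sum>k. \<integral>\<^sup>+x. g (r k) x \<partial>M)"
    by (rule nn_integral_suminf) (use gm in auto)
  also have "\<dots> \<le> (\<Sum>k. ennreal ((1/2)^k))"
    by (intro suminf_le small) auto
  also have "\<dots> = ennreal (\<Sum>k. (1/2::real)^k)"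
    by (rule suminf_ennreal2) (auto intro: summable_geometric)
  also have "\<dots> < \<top>" by simp
  finally have fin: "(\<integral>\<^sup>+x. (\<Sum>k. g (r k) x) \<partial>M) \<noteq> \<top>" by simp
  have mAE: "(\<lambda>x. \<Sum>k. g (r k) x) \<in> borel_measurable M" using gm by measurable
  have "AE x in M. (\<Sum>k. g (r k) x) \<noteq> \<top>"
    using nn_integral_PInf_AE[OF mAE] fin by simp
  then have "AE x in M. (\<lambda>j. g (r j) x) \<longlonglongrightarrow> 0"
    by eventually_elim (rule ennreal_series_tendsto0)
  with sm show ?thesis by blast
qed

lemma simple_sq_integral:
  fixes p :: "nat \<Rightarrow> real" and \<xi> :: "nat \<Rightarrow> 'w \<Rightarrow> real"
  assumes p0: "p 0 = 0" and pm: "p m = T" and pinc: "\<forall>i<m. p i < p (Suc i)"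
  shows "(\<integral>\<^sup>+s. indicator {0..T} s * ennreal ((simple_process m p \<xi> s \<omega>)\<^sup>2) \<partial>lborel)
       = ennreal (\<Sum>i<m. (\<xi> i \<omega>)\<^sup>2 * (p (Suc i) - p i))"
proof -
  have ple: "\<And>i j. i \<le> j \<Longrightarrow> j \<le> m \<Longrightarrow> p i \<le> p j" using strict_inc_le[OF pinc] by blast
  have disj: "s \<notin> {p j<..p (Suc j)}" if "s \<in> {p i<..p (Suc i)}" "i < m" "j < m" "i \<noteq> j" for s i j
  proof (cases "i < j")
    case True
    then have "p (Suc i) \<le> p j" using ple[of "Suc i" j] that by auto
    then show ?thesis using that by auto
  next
    case False
    then have "p (Suc j) \<le> p i" using ple[of "Suc j" i] that by auto
    then show ?thesis using that by auto
  qed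
  have sq: "indicator {0..T} s * ennreal ((simple_process m p \<xi> s \<omega>)\<^sup>2)
      = (\<Sum>i<m. ennreal ((\<xi> i \<omega>)\<^sup>2) * indicator {p i<..p (Suc i)} s)" for s
  proof (cases "\<exists>i<m. s \<in> {p i<..p (Suc i)}")
    case True
    then obtain i where i: "i < m" "s \<in> {p i<..p (Suc i)}" by blast
    have others: "\<And>j. j \<in> {..<m} - {i} \<Longrightarrow> s \<notin> {p j<..p (Suc j)}" using disj[OF i(2) i(1)] by auto
    have sp: "simple_process m p \<xi> s \<omega> = \<xi> i \<omega>"
      unfolding simple_process_def
      by (subst sum.remove[of _ i]) (use i others in \<open>auto intro!: sum.neutral\<close>)
    have "0 \<le> p i" "p (Suc i) \<le> T" using ple[of 0 i] ple[of "Suc i" m] i p0 pm by auto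
    then have "s \<in> {0..T}" using i by auto
    moreover have "(\<Sum>j<m. ennreal ((\<xi> j \<omega>)\<^sup>2) * indicator {p j<..p (Suc j)} s) = ennreal ((\<xi> i \<omega>)\<^sup>2)"
      by (subst sum.remove[of _ i]) (use i others in \<open>auto intro!: sum.neutral\<close>)
    ultimately show ?thesis using sp by simp
  next
    case False
    then have "simple_process m p \<xi> s \<omega> = 0" unfolding simple_process_def
      by (auto intro!: sum.neutral)
    then show ?thesis using False by (auto intro!: sum.neutral[symmetric])
  qed
  have "(\<integral>\<^sup>+s. indicator {0..T} s * ennreal ((simple_process m p \<xi> s \<omega>)\<^sup>2) \<partial>lborel)
      = (\<integral>\<^sup>+s. (\<Sum>i<m. ennreal ((\<xi> i \<omega>)\<^sup>2) * indicator {p i<..p (Suc i)} s) \<partial>lborel)"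
    by (simp add: sq)
  also have "\<dots> = (\<Sum>i<m. \<integral>\<^sup>+s. ennreal ((\<xi> i \<omega>)\<^sup>2) * indicator {p i<..p (Suc i)} s \<partial>lborel)"
    by (rule nn_integral_sum) auto
  also have "\<dots> = (\<Sum>i<m. ennreal ((\<xi> i \<omega>)\<^sup>2) * ennreal (p (Suc i) - p i))"
  proof (rule sum.cong[OF refl])
    fix i assume "i \<in> {..<m}"
    then have "p i \<le> p (Suc i)" using pinc by (auto intro: less_imp_le)
    then show "(\<integral>\<^sup>+s. ennreal ((\<xi> i \<omega>)\<^sup>2) * indicator {p i<..p (Suc i)} s \<partial>lborel)
        = ennreal ((\<xi> i \<omega>)\<^sup>2) * ennreal (p (Suc i) - p i)"
      by (simp add: nn_integral_cmult_indicator emeasure_lborel_Ioc)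
  qed
  also have "\<dots> = ennreal (\<Sum>i<m. (\<xi> i \<omega>)\<^sup>2 * (p (Suc i) - p i))"
  proof -
    have nn: "\<And>i. i < m \<Longrightarrow> 0 \<le> p (Suc i) - p i" using pinc by (auto intro: less_imp_le)
    have "(\<Sum>i<m. ennreal ((\<xi> i \<omega>)\<^sup>2) * ennreal (p (Suc i) - p i)) = (\<Sum>i<m. ennreal ((\<xi> i \<omega>)\<^sup>2 * (p (Suc i) - p i)))"
      by (rule sum.cong[OF refl]) (simp add: ennreal_mult')
    also have "\<dots> = ennreal (\<Sum>i<m. (\<xi> i \<omega>)\<^sup>2 * (p (Suc i) - p i))"
      by (rule sum_ennreal) (use nn in simp)
    finally show ?thesis .
  qed
  finally show ?thesis .
qed


lemma ito_exp_bound: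
  fixes P :: "'x measure" and Fm :: "real \<Rightarrow> 'x measure" and W H :: "real \<Rightarrow> 'x \<Rightarrow> real"
    and Z :: "'x \<Rightarrow> real"
  assumes P: "prob_space P"
    and Fsp: "\<And>s. 0 \<le> s \<Longrightarrow> s \<le> T \<Longrightarrow> space (Fm s) = space P"
    and Fmono: "\<And>s s'. 0 \<le> s \<Longrightarrow> s \<le> s' \<Longrightarrow> s' \<le> T \<Longrightarrow> sets (Fm s) \<subseteq> sets (Fm s')"
    and FP: "sets (Fm T) \<subseteq> sets P"
    and Wm: "\<And>s. 0 \<le> s \<Longrightarrow> s \<le> T \<Longrightarrow> W s \<in> borel_measurable (Fm s)"
    and ind: "\<And>p q A C. 0 \<le> p \<Longrightarrow> p < q \<Longrightarrow> q \<le> T \<Longrightarrow> A \<in> sets (Fm p) \<Longrightarrow> C \<in> sets borel \<Longrightarrow>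
        measure P (A \<inter> ((\<lambda>x. W q x - W p x) -` C \<inter> space P))
          = measure P A * measure P ((\<lambda>x. W q x - W p x) -` C \<inter> space P)"
    and dist: "\<And>p q. 0 \<le> p \<Longrightarrow> p < q \<Longrightarrow> q \<le> T \<Longrightarrow>
        distr P lborel (\<lambda>x. W q x - W p x) = density lborel (\<lambda>y. ennreal (normal_density 0 (sqrt (q - p)) y))"
    and ito: "is_ito_integral P Fm T W H Z"
    and T: "0 \<le> T"
    and Hb: "\<And>s x. s \<in> {0..T} \<Longrightarrow> x \<in> space P \<Longrightarrow> \<bar>H s x\<bar> \<le> Bh"
    and Hm: "(\<lambda>(x,s). if s \<in> {0..T} then H s x else 0) \<in> borel_measurable (P \<Otimes>\<^sub>M lborel)"
  shows "(\<integral>\<^sup>+x. ennreal (exp (c * Z x - c\<^sup>2 * (LINT u:{0..T}|lborel. (H u x)\<^sup>2))) \<partial>P) \<le> 1"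
proof -
  interpret prob_space P by fact
  define Hh where "Hh x s = (if s \<in> {0..T} then H s x else 0)" for x s
  have Hhm: "(\<lambda>(x,s). Hh x s) \<in> borel_measurable (P \<Otimes>\<^sub>M lborel)" using Hm by (simp add: Hh_def)
  have Hhm2: "(\<lambda>s. Hh x s) \<in> borel_measurable lborel" if "x \<in> space P" for x
    using measurable_Pair2[OF Hhm that] by simp
  obtain mm pp \<xi>\<xi> where Zm: "Z \<in> borel_measurable P"
    and si: "\<And>n. simple_integrand P Fm T (mm n) (pp n) (\<xi>\<xi> n)"
    and c1: "(\<lambda>n. \<integral>\<^sup>+ \<omega>. (\<integral>\<^sup>+ s. indicator {0..T} s *
              ennreal ((H s \<omega> - simple_process (mm n) (pp n) (\<xi>\<xi> n) s \<omega>)\<^sup>2) \<partial>lborel) \<partial>P) \<longlonglongrightarrow> 0"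
    and c2: "(\<lambda>n. \<integral>\<^sup>+ \<omega>. ennreal ((Z \<omega> - simple_stoch_int (mm n) (pp n) (\<xi>\<xi> n) W \<omega>)\<^sup>2) \<partial>P) \<longlonglongrightarrow> 0"
    using ito unfolding is_ito_integral_def by blast
  have toP: "f \<in> borel_measurable P" if "f \<in> borel_measurable (Fm s)" "0 \<le> s" "s \<le> T" for f s
    using meas_sub[OF that(1) Fsp[OF that(2,3)]] Fmono[OF that(2,3) order_refl] FP that by auto
  have pfacts: "pp n 0 = 0" "pp n (mm n) = T" "\<forall>i<mm n. pp n i < pp n (Suc i)" for n
    using si[of n] unfolding simple_integrand_def by auto
  have prange: "0 \<le> pp n i \<and> pp n i \<le> T" if "i \<le> mm n" for n i
    using strict_inc_le[OF pfacts(3)[of n], of 0 i] strict_inc_le[OF pfacts(3)[of n], of i "mm n"] pfacts(1,2)[of n] that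
    by auto
  have \<xi>m: "\<xi>\<xi> n i \<in> borel_measurable P" if "i < mm n" for n i
    using si[of n] that prange[of i n] unfolding simple_integrand_def by (auto intro: toP)
  have Wm': "W s \<in> borel_measurable P" if "0 \<le> s" "s \<le> T" for s using toP[OF Wm[OF that] that] .
  define S where "S n s x = simple_process (mm n) (pp n) (\<xi>\<xi> n) s x" for n s x
  define SI where "SI n x = simple_stoch_int (mm n) (pp n) (\<xi>\<xi> n) W x" for n x
  define I where "I n x = (\<integral>\<^sup>+ s. indicator {0..T} s * ennreal ((H s x - S n s x)\<^sup>2) \<partial>lborel)" for n x
  define K where "K n x = ennreal ((Z x - SI n x)\<^sup>2)" for n x
  define Q where "Q n x = (\<Sum>i<mm n. (\<xi>\<xi> n i x)\<^sup>2 * (pp n (Suc i) - pp n i))" for n x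
  define J where "J x = (LINT u:{0..T}|lborel. (H u x)\<^sup>2)" for x
  have SIm: "SI n \<in> borel_measurable P" for n
  proof -
    have "(\<lambda>x. \<Sum>i<mm n. \<xi>\<xi> n i x * (W (pp n (Suc i)) x - W (pp n i) x)) \<in> borel_measurable P"
    proof (rule borel_measurable_sum)
      fix i assume "i \<in> {..<mm n}"
      then have "\<xi>\<xi> n i \<in> borel_measurable P" "W (pp n (Suc i)) \<in> borel_measurable P" "W (pp n i) \<in> borel_measurable P"
        using \<xi>m[of i n] Wm' prange[of i n] prange[of "Suc i" n] by auto
      then show "(\<lambda>x. \<xi>\<xi> n i x * (W (pp n (Suc i)) x - W (pp n i) x)) \<in> borel_measurable P" by measurable
    qed
    then show ?thesis by (simp add: SI_def[abs_def] simple_stoch_int_def)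
  qed
  have Sm: "(\<lambda>(x,s). S n s x) \<in> borel_measurable (P \<Otimes>\<^sub>M lborel)" for n
  proof -
    have "(\<lambda>z. \<Sum>i<mm n. \<xi>\<xi> n i (fst z) * indicator {pp n i<..pp n (Suc i)} (snd z)) \<in> borel_measurable (P \<Otimes>\<^sub>M lborel)"
    proof (rule borel_measurable_sum)
      fix i assume "i \<in> {..<mm n}"
      then have [measurable]: "\<xi>\<xi> n i \<in> borel_measurable P" using \<xi>m by auto
      show "(\<lambda>z. \<xi>\<xi> n i (fst z) * indicator {pp n i<..pp n (Suc i)} (snd z)) \<in> borel_measurable (P \<Otimes>\<^sub>M lborel)"
        by measurable
    qed
    then show ?thesis by (simp add: S_def simple_process_def case_prod_beta)
  qed
  have Ieq: "I n x = (\<integral>\<^sup>+ s. ennreal (indicator {0..T} s * (Hh x s - S n s x)\<^sup>2) \<partial>lborel)" for n x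
    unfolding I_def by (intro nn_integral_cong) (auto simp: Hh_def indicator_def)
  have Im: "I n \<in> borel_measurable P" for n
  proof -
    have "(\<lambda>(x,s). ennreal (indicator {0..T} s * (Hh x s - S n s x)\<^sup>2)) \<in> borel_measurable (P \<Otimes>\<^sub>M lborel)"
      using Hhm Sm[of n] by (simp add: case_prod_beta) measurable
    then have "(\<lambda>x. \<integral>\<^sup>+ s. ennreal (indicator {0..T} s * (Hh x s - S n s x)\<^sup>2) \<partial>lborel) \<in> borel_measurable P"
      by (rule lborel.borel_measurable_nn_integral)
    then show ?thesis by (simp add: Ieq[abs_def])
  qed
  have Km: "K n \<in> borel_measurable P" for n using SIm[of n] Zm unfolding K_def[abs_def] by measurable
  have Jeq: "J x = integral\<^sup>L lborel (\<lambda>s. (Hh x s)\<^sup>2)" for x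
    unfolding J_def set_lebesgue_integral_def by (intro Bochner_Integration.integral_cong) (auto simp: Hh_def indicator_def)
  have Jm: "J \<in> borel_measurable P"
  proof -
    have "(\<lambda>(x,s). (Hh x s)\<^sup>2) \<in> borel_measurable (P \<Otimes>\<^sub>M lborel)" using Hhm by (simp add: case_prod_beta) measurable
    then have "(\<lambda>x. integral\<^sup>L lborel (\<lambda>s. (Hh x s)\<^sup>2)) \<in> borel_measurable P"
      by (rule lborel.borel_measurable_lebesgue_integral[where f="\<lambda>x s. (Hh x s)\<^sup>2", simplified])
    then show ?thesis by (simp add: Jeq[abs_def])
  qed
  have Bh0: "0 \<le> Bh"
  proof -
    obtain x where "x \<in> space P" using not_empty by blast
    then show ?thesis using Hb[of 0 x] T by auto
  qed
  have Jnn: "ennreal (J x) = (\<integral>\<^sup>+ s. ennreal ((Hh x s)\<^sup>2) \<partial>lborel)" "0 \<le> J x" if x: "x \<in> space P" for x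
  proof -
    have le: "ennreal ((Hh x s)\<^sup>2) \<le> ennreal (Bh\<^sup>2) * indicator {0..T} s" for s
    proof (cases "s \<in> {0..T}")
      case True
      then have "\<bar>Hh x s\<bar> \<le> Bh" using Hb[OF True x] by (simp add: Hh_def)
      then have "(Hh x s)\<^sup>2 \<le> Bh\<^sup>2" by (metis abs_ge_zero power2_abs power_mono)
      then show ?thesis using True by simp
    qed (auto simp: Hh_def)
    have "(\<integral>\<^sup>+ s. ennreal ((Hh x s)\<^sup>2) \<partial>lborel) \<le> (\<integral>\<^sup>+ s. ennreal (Bh\<^sup>2) * indicator {0..T} s \<partial>lborel)"
      by (rule nn_integral_mono) (rule le)
    also have "\<dots> = ennreal (Bh\<^sup>2) * ennreal T" using T by (simp add: nn_integral_cmult_indicator)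
    also have "\<dots> < \<top>" by (simp add: ennreal_mult_less_top)
    finally have fin: "(\<integral>\<^sup>+ s. ennreal ((Hh x s)\<^sup>2) \<partial>lborel) \<noteq> \<top>" by simp
    have "J x = enn2real (\<integral>\<^sup>+ s. ennreal ((Hh x s)\<^sup>2) \<partial>lborel)"
      unfolding Jeq by (rule integral_eq_nn_integral) (use Hhm2[OF x] in auto)
    then show "ennreal (J x) = (\<integral>\<^sup>+ s. ennreal ((Hh x s)\<^sup>2) \<partial>lborel)" "0 \<le> J x"
      using fin by (auto simp: ennreal_enn2real_if)
  qed
  have Qb: "Q n x \<le> 2 * J x + 2 * enn2real (I n x)" if x: "x \<in> space P" and fin: "I n x \<noteq> \<top>" for n x
  proof -
    have "ennreal (Q n x) = (\<integral>\<^sup>+s. indicator {0..T} s * ennreal ((S n s x)\<^sup>2) \<partial>lborel)"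
      unfolding Q_def S_def by (rule simple_sq_integral[symmetric]) (use pfacts in auto)
    also have "\<dots> \<le> (\<integral>\<^sup>+s. ennreal (2 * (Hh x s)\<^sup>2) + 2 * ennreal (indicator {0..T} s * (Hh x s - S n s x)\<^sup>2) \<partial>lborel)"
    proof (rule nn_integral_mono)
      fix s
      show "indicator {0..T} s * ennreal ((S n s x)\<^sup>2) \<le> ennreal (2 * (Hh x s)\<^sup>2) + 2 * ennreal (indicator {0..T} s * (Hh x s - S n s x)\<^sup>2)"
      proof (cases "s \<in> {0..T}")
        case True
        have e: "2 * (Hh x s)\<^sup>2 + 2 * (Hh x s - S n s x)\<^sup>2 - (S n s x)\<^sup>2 = (2 * Hh x s - S n s x)\<^sup>2"
          by (simp add: power2_eq_square algebra_simps)
        have "(S n s x)\<^sup>2 \<le> 2 * (Hh x s)\<^sup>2 + 2 * (Hh x s - S n s x)\<^sup>2"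
          using e zero_le_power2[of "2 * Hh x s - S n s x"] by linarith
        then have "ennreal ((S n s x)\<^sup>2) \<le> ennreal (2 * (Hh x s)\<^sup>2 + 2 * (Hh x s - S n s x)\<^sup>2)"
          by (rule ennreal_leI)
        also have "\<dots> = ennreal (2 * (Hh x s)\<^sup>2) + 2 * ennreal ((Hh x s - S n s x)\<^sup>2)"
          by (subst ennreal_plus) (simp_all add: ennreal_mult)
        finally show ?thesis using True by simp
      qed simp
    qed
    also have "\<dots> = (\<integral>\<^sup>+s. ennreal (2 * (Hh x s)\<^sup>2) \<partial>lborel) + 2 * I n x"
      using Hhm2[OF x] Sm[of n] x
      by (subst nn_integral_add) (auto simp: Ieq nn_integral_cmult measurable_Pair2[of "\<lambda>(x,s). S n s x", simplified])
    also have "(\<integral>\<^sup>+s. ennreal (2 * (Hh x s)\<^sup>2) \<partial>lborel) = 2 * ennreal (J x)"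
      using Hhm2[OF x] Jnn[OF x] by (simp add: ennreal_mult' nn_integral_cmult)
    also have "2 * ennreal (J x) + 2 * I n x = ennreal (2 * J x + 2 * enn2real (I n x))"
      using fin Jnn[OF x] by (simp add: ennreal_plus ennreal_mult' ennreal_enn2real_if)
    finally have "ennreal (Q n x) \<le> ennreal (2 * J x + 2 * enn2real (I n x))" .
    moreover have "0 \<le> 2 * J x + 2 * enn2real (I n x)" using Jnn[OF x] by simp
    ultimately show ?thesis using ennreal_le_iff by blast
  qed
  have mart: "(\<integral>\<^sup>+x. ennreal (exp (c * SI n x - c\<^sup>2/2 * Q n x)) \<partial>P) = 1" for n
    unfolding SI_def Q_def
    by (rule simple_exp_mart[OF P Fsp Fmono FP Wm ind dist si]) auto
  define d where "d n x = (if I n x = \<top> then 0 else exp (c * SI n x - c\<^sup>2/2 * (2 * J x + 2 * enn2real (I n x))))" for n x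
  have dm: "(\<lambda>x. ennreal (d n x)) \<in> borel_measurable P" for n
    using Im[of n] SIm[of n] Jm unfolding d_def by measurable
  have dle: "(\<integral>\<^sup>+x. ennreal (d n x) \<partial>P) \<le> 1" for n
  proof -
    have "(\<integral>\<^sup>+x. ennreal (d n x) \<partial>P) \<le> (\<integral>\<^sup>+x. ennreal (exp (c * SI n x - c\<^sup>2/2 * Q n x)) \<partial>P)"
    proof (rule nn_integral_mono)
      fix x assume x: "x \<in> space P"
      show "ennreal (d n x) \<le> ennreal (exp (c * SI n x - c\<^sup>2/2 * Q n x))"
      proof (cases "I n x = \<top>")
        case False
        have "c\<^sup>2/2 * Q n x \<le> c\<^sup>2/2 * (2 * J x + 2 * enn2real (I n x))"
          using Qb[OF x False] by (intro mult_left_mono) auto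
        then show ?thesis using False by (simp add: d_def)
      qed (simp add: d_def)
    qed
    then show ?thesis using mart[of n] by simp
  qed
  define g where "g n x = I n x + K n x" for n x
  have gm: "g n \<in> borel_measurable P" for n using Im[of n] Km[of n] unfolding g_def[abs_def] by measurable
  have glim: "(\<lambda>n. \<integral>\<^sup>+x. g n x \<partial>P) \<longlonglongrightarrow> 0"
  proof -
    have "(\<lambda>n. \<integral>\<^sup>+x. g n x \<partial>P) = (\<lambda>n. (\<integral>\<^sup>+x. I n x \<partial>P) + (\<integral>\<^sup>+x. K n x \<partial>P))"
      unfolding g_def using Im Km by (subst nn_integral_add) auto
    moreover have "(\<lambda>n. (\<integral>\<^sup>+x. I n x \<partial>P) + (\<integral>\<^sup>+x. K n x \<partial>P)) \<longlonglongrightarrow> 0 + 0"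
      using c1 c2 unfolding I_def K_def S_def SI_def by (intro tendsto_add) auto
    ultimately show ?thesis by simp
  qed
  obtain r where r: "strict_mono r" and ae: "AE x in P. (\<lambda>j. g (r j) x) \<longlonglongrightarrow> 0"
    using nn_AE_subseq[OF gm glim] by blast
  have ae2: "AE x in P. ennreal (exp (c * Z x - c\<^sup>2 * J x)) = liminf (\<lambda>j. ennreal (d (r j) x))"
    using ae
  proof (eventually_elim)
    case (elim x)
    have Il: "(\<lambda>j. I (r j) x) \<longlonglongrightarrow> 0"
      by (rule tendsto_sandwich[OF _ _ tendsto_const elim]) (auto simp: g_def)
    have Kl: "(\<lambda>j. K (r j) x) \<longlonglongrightarrow> 0"
      by (rule tendsto_sandwich[OF _ _ tendsto_const elim]) (auto simp: g_def)
    have evfin: "eventually (\<lambda>j. I (r j) x \<noteq> \<top>) sequentially"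
      using order_tendstoD(2)[OF Il, of \<top>] by (auto elim: eventually_mono)
    have Ir: "(\<lambda>j. enn2real (I (r j) x)) \<longlonglongrightarrow> 0"
      using tendsto_enn2real[of "\<lambda>j. I (r j) x" 0] Il by simp
    have "(\<lambda>j. (Z x - SI (r j) x)\<^sup>2) \<longlonglongrightarrow> 0"
      using Kl unfolding K_def by (subst (asm) ennreal_tendsto_0_iff) auto
    then have "(\<lambda>j. sqrt ((Z x - SI (r j) x)\<^sup>2)) \<longlonglongrightarrow> sqrt 0" by (rule tendsto_real_sqrt)
    then have "(\<lambda>j. \<bar>Z x - SI (r j) x\<bar>) \<longlonglongrightarrow> 0" by simp
    then have "(\<lambda>j. Z x - SI (r j) x) \<longlonglongrightarrow> 0" by (rule tendsto_rabs_zero_cancel)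
    then have "(\<lambda>j. Z x - (Z x - SI (r j) x)) \<longlonglongrightarrow> Z x - 0" by (intro tendsto_diff tendsto_const)
    then have SIl: "(\<lambda>j. SI (r j) x) \<longlonglongrightarrow> Z x" by simp
    have "(\<lambda>j. exp (c * SI (r j) x - c\<^sup>2/2 * (2 * J x + 2 * enn2real (I (r j) x))))
        \<longlonglongrightarrow> exp (c * Z x - c\<^sup>2/2 * (2 * J x + 2 * 0))"
      by (intro tendsto_intros SIl Ir)
    then have l1: "(\<lambda>j. exp (c * SI (r j) x - c\<^sup>2/2 * (2 * J x + 2 * enn2real (I (r j) x))))
        \<longlonglongrightarrow> exp (c * Z x - c\<^sup>2 * J x)" by simp
    have "(\<lambda>j. d (r j) x) \<longlonglongrightarrow> exp (c * Z x - c\<^sup>2 * J x)"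
      by (rule Lim_transform_eventually[OF l1]) (use evfin in \<open>auto elim: eventually_mono simp: d_def\<close>)
    then have "(\<lambda>j. ennreal (d (r j) x)) \<longlonglongrightarrow> ennreal (exp (c * Z x - c\<^sup>2 * J x))"
      by (rule tendsto_ennrealI)
    then show ?case by (simp add: lim_imp_Liminf)
  qed
  have "(\<integral>\<^sup>+x. ennreal (exp (c * Z x - c\<^sup>2 * J x)) \<partial>P) = (\<integral>\<^sup>+x. liminf (\<lambda>j. ennreal (d (r j) x)) \<partial>P)"
    by (rule nn_integral_cong_AE[OF ae2])
  also have "\<dots> \<le> liminf (\<lambda>j. \<integral>\<^sup>+x. ennreal (d (r j) x) \<partial>P)"
    by (rule nn_integral_liminf) (rule dm)
  also have "\<dots> \<le> 1"
    by (rule Liminf_le) (simp_all add: dle)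
  finally show ?thesis unfolding J_def .
qed


lemma partition_exists:
  fixes J :: "real set" and p q :: real
  assumes J: "finite J" "J \<subseteq> {0..p}" and pq: "0 \<le> p" "p < q"
  shows "\<exists>k r. r 0 = 0 \<and> r k = p \<and> r (Suc k) = q \<and> (\<forall>i<Suc k. r i < r (Suc i)) \<and> (\<forall>j\<in>J. \<exists>i\<le>k. r i = j)"
proof -
  define S where "S = insert p J - {0}"
  define L where "L = sorted_list_of_set S"
  define k where "k = length L"
  define r where "r i = (0 # L @ [q]) ! i" for i
  have finS: "finite S" using J by (simp add: S_def)
  have setL: "set L = S" using finS by (simp add: L_def)
  have sw: "sorted_wrt (<) L" by (simp add: L_def strict_sorted_list_of_set)
  have Lrange: "0 < L ! i \<and> L ! i \<le> p" if "i < k" for i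
  proof -
    have "L ! i \<in> S" using that setL nth_mem k_def by metis
    then show ?thesis using J pq unfolding S_def by auto
  qed
  have r0: "r 0 = 0" by (simp add: r_def)
  have rSk: "r (Suc k) = q" by (simp add: r_def k_def nth_append)
  have rS: "r (Suc i) = L ! i" if "i < k" for i using that by (simp add: r_def k_def nth_append)
  have mono: "\<forall>i<Suc k. r i < r (Suc i)"
  proof (intro allI impI)
    fix i assume i: "i < Suc k"
    show "r i < r (Suc i)"
    proof (cases i)
      case 0
      show ?thesis
      proof (cases "k = 0")
        case True then show ?thesis using 0 r0 rSk pq by simp
      next
        case False then show ?thesis using 0 r0 rS[of 0] Lrange[of 0] by simp
      qed
    next
      case (Suc i')
      then have i': "i' < k" using i by simp
      show ?thesis
      proof (cases "Suc i' < k")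
        case True
        then show ?thesis using Suc rS[OF i'] rS[OF True] sorted_wrt_nth_less[OF sw, of i' "Suc i'"] k_def by simp
      next
        case False
        then have "Suc i' = k" using i' by simp
        then show ?thesis using Suc rS[OF i'] rSk Lrange[OF i'] pq by simp
      qed
    qed
  qed
  have rk: "r k = p"
  proof (cases "k = 0")
    case True
    then have "S = {}" using setL k_def by auto
    then have "p = 0" unfolding S_def by auto
    then show ?thesis using True r0 by simp
  next
    case False
    then have "p \<noteq> 0"
    proof -
      have "S \<noteq> {}" using False setL k_def by auto
      then show ?thesis using J unfolding S_def by auto
    qed
    then have "p \<in> set L" using setL S_def by auto
    then obtain i0 where i0: "i0 < k" "L ! i0 = p" by (metis in_set_conv_nth k_def)
    have "L ! (k - 1) = p"
    proof (rule ccontr)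
      assume ne: "L ! (k - 1) \<noteq> p"
      then have "i0 < k - 1" using i0 by (cases "i0 = k - 1") auto
      then have "L ! i0 < L ! (k - 1)" using sorted_wrt_nth_less[OF sw, of i0 "k - 1"] False k_def by simp
      then show False using i0 Lrange[of "k - 1"] False by simp
    qed
    then show ?thesis using rS[of "k - 1"] False by simp
  qed
  have cover: "\<forall>j\<in>J. \<exists>i\<le>k. r i = j"
  proof
    fix j assume j: "j \<in> J"
    show "\<exists>i\<le>k. r i = j"
    proof (cases "j = 0")
      case True then show ?thesis using r0 by (intro exI[of _ 0]) simp
    next
      case False
      then have "j \<in> set L" using setL S_def j by auto
      then obtain i' where "i' < k" "L ! i' = j" by (metis in_set_conv_nth k_def)
      then show ?thesis using rS by (intro exI[of _ "Suc i'"]) auto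
    qed
  qed
  show ?thesis using r0 rk rSk mono cover by blast
qed


lemma bm_pi_indep:
  fixes M :: "'w measure" and w :: "real \<Rightarrow> 'w \<Rightarrow> real"
  assumes BM: "brownian_motion M t w"
    and J: "finite J" "J \<subseteq> {0..p}" and B: "\<And>j. j \<in> J \<Longrightarrow> B j \<in> sets borel"
    and pq: "0 \<le> p" "p < q" "q \<le> t" and C: "C \<in> sets borel"
  shows "measure M ({\<omega>\<in>space M. \<forall>j\<in>J. w j \<omega> \<in> B j} \<inter> ((\<lambda>\<omega>. w q \<omega> - w p \<omega>) -` C \<inter> space M))
    = measure M {\<omega>\<in>space M. \<forall>j\<in>J. w j \<omega> \<in> B j} * measure M ((\<lambda>\<omega>. w q \<omega> - w p \<omega>) -` C \<inter> space M)"
proof -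
  have PS: "prob_space M" and w0: "\<And>\<omega>. \<omega> \<in> space M \<Longrightarrow> w 0 \<omega> = 0"
    and BMind: "\<And>m r. r 0 \<ge> 0 \<Longrightarrow> r m \<le> t \<Longrightarrow> (\<forall>i<m. r i < r (Suc i)) \<Longrightarrow>
        prob_space.indep_vars M (\<lambda>_. borel) (\<lambda>i \<omega>. w (r (Suc i)) \<omega> - w (r i) \<omega>) {..<m}"
    using BM unfolding brownian_motion_def by auto
  interpret prob_space M by fact
  obtain k r where r0: "r 0 = 0" and rk: "r k = p" and rSk: "r (Suc k) = q"
    and mono: "\<forall>i<Suc k. r i < r (Suc i)" and cover: "\<forall>j\<in>J. \<exists>i\<le>k. r i = j"
    using partition_exists[OF J pq(1,2)] by blast
  define X where "X i \<omega> = w (r (Suc i)) \<omega> - w (r i) \<omega>" for i \<omega>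
  have iv: "indep_vars (\<lambda>_. borel) X {..<Suc k}"
    unfolding X_def by (rule BMind) (use r0 rSk pq mono in auto)
  have tel: "w (r i) \<omega> = (\<Sum>l<i. X l \<omega>)" if "\<omega> \<in> space M" for i \<omega>
  proof (induction i)
    case 0 then show ?case using r0 w0[OF that] by simp
  next
    case (Suc i) then show ?case by (simp add: X_def)
  qed
  define E where "E i = {X i -` A \<inter> space M | A. A \<in> sets (borel :: real measure)}" for i
  have Xrv: "X i \<in> borel_measurable M" if "i < Suc k" for i
    using iv that unfolding indep_vars_def2 by auto
  have indE: "indep_sets E {..<Suc k}"
    using iv unfolding indep_vars_def2 E_def by auto
  define I where "I b = (if b then {..<k} else {k})" for b
  have UI: "(\<Union>b\<in>UNIV. I b) = {..<Suc k}" by (auto simp: I_def)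
  have stE: "Int_stable (E i)" for i
  proof (unfold E_def, safe intro!: Int_stableI)
    fix A B assume "A \<in> sets (borel :: real measure)" "B \<in> sets (borel :: real measure)"
    then show "\<exists>C. (X i -` A \<inter> space M) \<inter> (X i -` B \<inter> space M) = (X i -` C \<inter> space M) \<and> C \<in> sets borel"
      by (intro exI[of _ "A \<inter> B"]) auto
  qed
  have coll: "indep_sets (\<lambda>b. sigma_sets (space M) (\<Union>i\<in>I b. E i)) UNIV"
    by (rule indep_sets_collect_sigma) (use indE UI stE in \<open>auto simp: disjoint_family_on_def I_def\<close>)
  define a where "a = {\<omega>\<in>space M. \<forall>j\<in>J. w j \<omega> \<in> B j}"
  define b where "b = X k -` C \<inter> space M"
  define Mk where "Mk = sigma (space M) (\<Union>i\<in>{..<k}. E i)"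
  have genPow: "(\<Union>i\<in>{..<k}. E i) \<subseteq> Pow (space M)" by (auto simp: E_def)
  have spMk: "space Mk = space M" using genPow by (simp add: Mk_def)
  have setsMk: "sets Mk = sigma_sets (space M) (\<Union>i\<in>{..<k}. E i)" using genPow by (simp add: Mk_def)
  have XMk: "X l \<in> borel_measurable Mk" if "l < k" for l
  proof (rule borel_measurableI)
    fix S :: "real set" assume "open S"
    then have "S \<in> sets (borel :: real measure)" by simp
    then have "X l -` S \<inter> space M \<in> E l" unfolding E_def by blast
    then show "X l -` S \<inter> space Mk \<in> sets Mk" using that spMk setsMk by auto
  qed
  have wMk: "w j \<in> borel_measurable Mk" if "j \<in> J" for j
  proof -
    have "\<exists>i\<le>k. r i = j" using cover that by simp
    then obtain i where i: "i \<le> k" "r i = j" by blast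
    have "(\<lambda>\<omega>. \<Sum>l<i. X l \<omega>) \<in> borel_measurable Mk"
      by (rule borel_measurable_sum) (use XMk i in auto)
    moreover have eq: "w j \<omega> = (\<Sum>l<i. X l \<omega>)" if "\<omega> \<in> space Mk" for \<omega>
    proof -
      have "\<omega> \<in> space M" using that spMk by simp
      from tel[OF this, of i] show ?thesis using i(2) by simp
    qed
    moreover have "w j \<in> borel_measurable Mk \<longleftrightarrow> (\<lambda>\<omega>. \<Sum>l<i. X l \<omega>) \<in> borel_measurable Mk"
      by (rule measurable_cong) (rule eq)
    ultimately show ?thesis by simp
  qed
  have aMk: "a \<in> sets Mk"
  proof -
    have "{\<omega>\<in>space Mk. \<forall>j\<in>J. w j \<omega> \<in> B j} \<in> sets Mk"
    proof (rule sets.sets_Collect_finite_All[OF _ J(1)])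
      fix j assume "j \<in> J"
      then have "w j -` B j \<inter> space Mk \<in> sets Mk" using measurable_sets[OF wMk B] by auto
      then show "{\<omega> \<in> space Mk. w j \<omega> \<in> B j} \<in> sets Mk" by (simp add: vimage_def Int_def conj_commute)
    qed
    then show ?thesis using spMk by (simp add: a_def)
  qed
  have a_in: "a \<in> sigma_sets (space M) (\<Union>i\<in>I True. E i)" using aMk setsMk by (simp add: I_def)
  have b_in: "b \<in> sigma_sets (space M) (\<Union>i\<in>I False. E i)"
    using C by (auto simp: I_def E_def b_def intro!: sigma_sets.Basic)
  have "prob (\<Inter>x\<in>UNIV. case_bool a b x) = (\<Prod>x\<in>UNIV. prob (case_bool a b x))"
    by (rule indep_setsD[OF coll]) (use a_in b_in in \<open>auto split: bool.split\<close>)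
  then have ab: "prob (a \<inter> b) = prob a * prob b" by (simp add: UNIV_bool Int_commute)
  have "b = (\<lambda>\<omega>. w q \<omega> - w p \<omega>) -` C \<inter> space M"
    unfolding b_def X_def using rk rSk by auto
  with ab show ?thesis by (simp add: a_def)
qed

definition wfilt :: "'w measure \<Rightarrow> (real \<Rightarrow> 'w \<Rightarrow> real) \<Rightarrow> real \<Rightarrow> 'w measure" where
  "wfilt M w s = sigma (space M) {w u -` B \<inter> space M | u B. u \<in> {0..s} \<and> B \<in> sets (borel :: real measure)}"

lemma wfilt_space[simp]: "space (wfilt M w s) = space M"
  unfolding wfilt_def by (rule space_measure_of) auto

lemma wfilt_sets: "sets (wfilt M w s) = sigma_sets (space M) {w u -` B \<inter> space M | u B. u \<in> {0..s} \<and> B \<in> sets (borel :: real measure)}"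
  unfolding wfilt_def by (rule sets_measure_of) auto

lemma wfilt_mono: "s \<le> s' \<Longrightarrow> sets (wfilt M w s) \<subseteq> sets (wfilt M w s')"
  unfolding wfilt_sets
proof (rule sigma_sets_mono', safe)
  fix u B assume "s \<le> s'" "u \<in> {0..s}" "B \<in> sets (borel :: real measure)"
  then show "\<exists>ua Ba. w u -` B \<inter> space M = w ua -` Ba \<inter> space M \<and> ua \<in> {0..s'} \<and> Ba \<in> sets (borel :: real measure)"
    by (intro exI[of _ u] exI[of _ B]) auto
qed

lemma wfilt_meas: "u \<in> {0..s} \<Longrightarrow> w u \<in> borel_measurable (wfilt M w s)"
proof (rule borel_measurableI)
  fix S :: "real set" assume "open S" "u \<in> {0..s}"
  then have "w u -` S \<inter> space M \<in> {w u -` B \<inter> space M | u B. u \<in> {0..s} \<and> B \<in> sets (borel :: real measure)}"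
    by (intro CollectI exI[of _ u] exI[of _ S]) auto
  then show "w u -` S \<inter> space (wfilt M w s) \<in> sets (wfilt M w s)"
    unfolding wfilt_sets by (auto intro: sigma_sets.Basic)
qed

lemma wfilt_subM:
  assumes "\<And>u. u \<in> {0..s} \<Longrightarrow> w u \<in> borel_measurable M"
  shows "sets (wfilt M w s) \<subseteq> sets M"
  unfolding wfilt_sets by (rule sets.sigma_sets_subset) (use assms in \<open>auto intro: measurable_sets\<close>)

lemma bm_indep:
  fixes M :: "'w measure" and w :: "real \<Rightarrow> 'w \<Rightarrow> real"
  assumes BM: "brownian_motion M t w"
    and pq: "0 \<le> p" "p < q" "q \<le> t" and A: "A \<in> sets (wfilt M w p)" and C: "C \<in> sets borel"
  shows "measure M (A \<inter> ((\<lambda>\<omega>. w q \<omega> - w p \<omega>) -` C \<inter> space M))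
    = measure M A * measure M ((\<lambda>\<omega>. w q \<omega> - w p \<omega>) -` C \<inter> space M)"
proof -
  have PS: "prob_space M" and wm: "\<And>s. s \<in> {0..t} \<Longrightarrow> w s \<in> borel_measurable M"
    using BM unfolding brownian_motion_def by auto
  interpret prob_space M by fact
  define PiS where "PiS = {{\<omega>\<in>space M. \<forall>j\<in>J. w j \<omega> \<in> B j} | J B. finite J \<and> J \<subseteq> {0..p} \<and> (\<forall>j\<in>J. B j \<in> sets (borel :: real measure))}"
  define D where "D = {(\<lambda>\<omega>. w q \<omega> - w p \<omega>) -` C' \<inter> space M | C'. C' \<in> sets (borel :: real measure)}"
  have wmP: "w u \<in> borel_measurable M" if "u \<in> {0..p}" for u using wm that pq by auto
  have PiSev: "PiS \<subseteq> events"
  proof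
    fix S assume "S \<in> PiS"
    then obtain J B where S: "S = {\<omega>\<in>space M. \<forall>j\<in>J. w j \<omega> \<in> B j}" "finite J" "J \<subseteq> {0..p}"
      "\<forall>j\<in>J. B j \<in> sets (borel :: real measure)" unfolding PiS_def by auto
    show "S \<in> events" unfolding S(1)
    proof (rule sets.sets_Collect_finite_All[OF _ S(2)])
      fix j assume j: "j \<in> J"
      have "w j -` B j \<inter> space M \<in> events" using measurable_sets[OF wmP S(4)[rule_format, OF j]] S(3) j by auto
      then show "{\<omega> \<in> space M. w j \<omega> \<in> B j} \<in> events" by (simp add: vimage_def Int_def conj_commute)
    qed
  qed
  have wq: "w q \<in> borel_measurable M" and wp: "w p \<in> borel_measurable M" using wm pq by auto
  have Dm: "(\<lambda>\<omega>. w q \<omega> - w p \<omega>) \<in> borel_measurable M" using wq wp by measurable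
  have Dev: "D \<subseteq> events" unfolding D_def using Dm by (auto intro: measurable_sets)
  have i1: "indep_set PiS D"
    unfolding indep_sets2_eq
  proof (intro conjI ballI PiSev Dev)
    fix S T assume "S \<in> PiS" "T \<in> D"
    then obtain J B C' where S: "S = {\<omega>\<in>space M. \<forall>j\<in>J. w j \<omega> \<in> B j}" "finite J" "J \<subseteq> {0..p}"
      "\<forall>j\<in>J. B j \<in> sets (borel :: real measure)" and T: "T = (\<lambda>\<omega>. w q \<omega> - w p \<omega>) -` C' \<inter> space M"
      "C' \<in> sets (borel :: real measure)" unfolding PiS_def D_def by auto
    show "prob (S \<inter> T) = prob S * prob T"
      unfolding S(1) T(1) by (rule bm_pi_indep[OF BM S(2,3) _ pq T(2)]) (use S(4) in auto)
  qed
  have stPiS: "Int_stable PiS"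
  proof (rule Int_stableI)
    fix S1 S2 assume "S1 \<in> PiS" "S2 \<in> PiS"
    then obtain J1 B1 J2 B2 where S1: "S1 = {\<omega>\<in>space M. \<forall>j\<in>J1. w j \<omega> \<in> B1 j}" "finite J1" "J1 \<subseteq> {0..p}"
      "\<forall>j\<in>J1. B1 j \<in> sets (borel :: real measure)"
      and S2: "S2 = {\<omega>\<in>space M. \<forall>j\<in>J2. w j \<omega> \<in> B2 j}" "finite J2" "J2 \<subseteq> {0..p}"
      "\<forall>j\<in>J2. B2 j \<in> sets (borel :: real measure)" unfolding PiS_def by auto
    define B where "B j = (if j \<in> J1 then B1 j else UNIV) \<inter> (if j \<in> J2 then B2 j else UNIV)" for j
    have "S1 \<inter> S2 = {\<omega>\<in>space M. \<forall>j\<in>J1 \<union> J2. w j \<omega> \<in> B j}"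
      unfolding S1(1) S2(1) B_def by auto
    moreover have "\<forall>j\<in>J1 \<union> J2. B j \<in> sets (borel :: real measure)" using S1(4) S2(4) by (auto simp: B_def)
    ultimately show "S1 \<inter> S2 \<in> PiS" unfolding PiS_def using S1(2,3) S2(2,3)
      by (intro CollectI exI[of _ "J1 \<union> J2"] exI[of _ B] conjI) auto
  qed
  have stD: "Int_stable D"
  proof (unfold D_def, safe intro!: Int_stableI)
    fix A B assume "A \<in> sets (borel :: real measure)" "B \<in> sets (borel :: real measure)"
    then show "\<exists>C. ((\<lambda>\<omega>. w q \<omega> - w p \<omega>) -` A \<inter> space M) \<inter> ((\<lambda>\<omega>. w q \<omega> - w p \<omega>) -` B \<inter> space M)
       = ((\<lambda>\<omega>. w q \<omega> - w p \<omega>) -` C \<inter> space M) \<and> C \<in> sets borel"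
      by (intro exI[of _ "A \<inter> B"]) auto
  qed
  have i2: "indep_set (sigma_sets (space M) PiS) (sigma_sets (space M) D)"
    by (rule indep_set_sigma_sets[OF i1 stPiS stD])
  have Asub: "A \<in> sigma_sets (space M) PiS"
  proof -
    have "{w u -` B \<inter> space M | u B. u \<in> {0..p} \<and> B \<in> sets (borel :: real measure)} \<subseteq> PiS"
    proof safe
      fix u B assume uB: "u \<in> {0..p}" "B \<in> sets (borel :: real measure)"
      have "w u -` B \<inter> space M = {\<omega>\<in>space M. \<forall>j\<in>{u}. w j \<omega> \<in> (\<lambda>_. B) j}" by auto
      then show "w u -` B \<inter> space M \<in> PiS" unfolding PiS_def using uB
        by (intro CollectI exI[of _ "{u}"] exI[of _ "\<lambda>_. B"] conjI) auto
    qed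
    then have "sigma_sets (space M) {w u -` B \<inter> space M | u B. u \<in> {0..p} \<and> B \<in> sets (borel :: real measure)}
        \<subseteq> sigma_sets (space M) PiS" by (rule sigma_sets_mono')
    then show ?thesis using A unfolding wfilt_sets by auto
  qed
  have Csub: "(\<lambda>\<omega>. w q \<omega> - w p \<omega>) -` C \<inter> space M \<in> sigma_sets (space M) D"
    using C unfolding D_def by (auto intro!: sigma_sets.Basic)
  from i2 have "\<forall>a\<in>sigma_sets (space M) PiS. \<forall>b\<in>sigma_sets (space M) D. prob (a \<inter> b) = prob a * prob b"
    unfolding indep_sets2_eq by simp
  then show ?thesis using Asub Csub by simp
qed


lemma Bsig_gens_Pow: "{{x \<in> Cpath t. x u \<in> A} | u A. u \<in> {0..s} \<and> A \<in> sets (borel :: real measure)} \<subseteq> Pow (Cpath t)"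
  by auto

lemma Bsig_space[simp]: "space (Bsig t s) = Cpath t"
  unfolding Bsig_def by (rule space_measure_of) auto

lemma Bsig_sets: "sets (Bsig t s) = sigma_sets (Cpath t) {{x \<in> Cpath t. x u \<in> A} | u A. u \<in> {0..s} \<and> A \<in> sets (borel :: real measure)}"
  unfolding Bsig_def by (rule sets_measure_of) auto

lemma Bsig_mono: "s \<le> s' \<Longrightarrow> sets (Bsig t s) \<subseteq> sets (Bsig t s')"
  unfolding Bsig_sets
proof (rule sigma_sets_mono', safe)
  fix u A assume "s \<le> s'" "u \<in> {0..s}" "A \<in> sets (borel :: real measure)"
  then show "\<exists>ua Aa. {x \<in> Cpath t. x u \<in> A} = {x \<in> Cpath t. x ua \<in> Aa} \<and> ua \<in> {0..s'} \<and> Aa \<in> sets (borel :: real measure)"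
    by (intro exI[of _ u] exI[of _ A]) auto
qed

lemma coord_meas: "u \<in> {0..s} \<Longrightarrow> (\<lambda>x. x u) \<in> borel_measurable (Bsig t s)"
proof (rule borel_measurableI)
  fix S :: "real set" assume "open S" "u \<in> {0..s}"
  then have "{x \<in> Cpath t. x u \<in> S} \<in> {{x \<in> Cpath t. x u \<in> A} | u A. u \<in> {0..s} \<and> A \<in> sets (borel :: real measure)}"
    by (intro CollectI exI[of _ u] exI[of _ S]) auto
  moreover have "(\<lambda>x. x u) -` S \<inter> space (Bsig t s) = {x \<in> Cpath t. x u \<in> S}" by auto
  ultimately show "(\<lambda>x. x u) -` S \<inter> space (Bsig t s) \<in> sets (Bsig t s)"
    unfolding Bsig_sets by (auto intro: sigma_sets.Basic)
qed

lemma restr_eq[simp]: "u \<in> {0..t} \<Longrightarrow> restr_path t f u = f u"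
  by (simp add: restr_path_def)

lemma restr_Cpath: "continuous_on {0..t} f \<Longrightarrow> restr_path t f \<in> Cpath t"
  unfolding Cpath_def
proof (intro CollectI conjI allI impI)
  assume "continuous_on {0..t} f"
  then show "continuous_on {0..t} (restr_path t f)"
    by (rule continuous_on_cong[THEN iffD1, rotated 2]) auto
next
  fix u assume u: "u \<notin> {0..t}" show "restr_path t f u = 0" unfolding restr_path_def by (rule if_not_P[OF u])
qed

lemma Cpath_cont: "x \<in> Cpath t \<Longrightarrow> continuous_on {0..t} x" by (simp add: Cpath_def)

lemma bounded_cont:
  fixes f :: "real \<Rightarrow> real"
  assumes "continuous_on {a..b} f"
  shows "\<exists>B. \<forall>u\<in>{a..b}. \<bar>f u\<bar> \<le> B"
proof -
  have "compact (f ` {a..b})" by (rule compact_continuous_image[OF assms compact_Icc])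
  then have "bounded (f ` {a..b})" by (rule compact_imp_bounded)
  then obtain B where "\<forall>y\<in>f ` {a..b}. norm y \<le> B" by (auto simp: bounded_iff)
  then show ?thesis by auto
qed

lemma sint_facts:
  fixes g :: "real \<Rightarrow> real"
  assumes gm: "g \<in> borel_measurable (restrict_space borel {0..t})"
    and gb: "\<And>u. u \<in> {0..t} \<Longrightarrow> \<bar>g u\<bar> \<le> C"
  shows "\<And>s. s \<in> {0..t} \<Longrightarrow> set_integrable lborel {0..s} g"
    and "continuous_on {0..t} (\<lambda>s. LINT u:{0..s}|lborel. g u)"
proof -
  define g' where "g' u = (if u \<in> {0..t} then g u else 0)" for u
  have g'm: "g' \<in> borel_measurable borel"
    using measurable_restrict_space_iff[of "{0..t}" borel 0 borel g] gm unfolding g'_def by simp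
  have g'i: "set_integrable lborel {0..b} g'" for b
  proof (rule set_integrable_bound)
    show "set_integrable lborel {0..b} (\<lambda>_. C)"
      by (rule borel_integrable_atLeastAtMost') (rule continuous_on_const)
    show "set_borel_measurable lborel {0..b} g'"
      unfolding set_borel_measurable_def using g'm by measurable
    show "AE x in lborel. x \<in> {0..b} \<longrightarrow> norm (g' x) \<le> norm C"
    proof (rule AE_I2, intro impI)
      fix x
      show "norm (g' x) \<le> norm C"
      proof (cases "x \<in> {0..t}")
        case True then show ?thesis using gb[OF True] by (simp add: g'_def)
      qed (auto simp: g'_def)
    qed
  qed
  have eqi: "indicator {0..s} x *\<^sub>R g x = indicator {0..s} x *\<^sub>R g' x" if "s \<in> {0..t}" for s x
    using that by (auto simp: g'_def indicator_def)
  show si: "set_integrable lborel {0..s} g" if "s \<in> {0..t}" for s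
  proof -
    have "(\<lambda>x. indicator {0..s} x *\<^sub>R g x) = (\<lambda>x. indicator {0..s} x *\<^sub>R g' x)"
      by (rule ext) (rule eqi[OF that])
    then show ?thesis using g'i[of s] unfolding set_integrable_def by simp
  qed
  have cont': "continuous_on UNIV (\<lambda>b. LBINT x:{0..b}. g' x)"
    by (rule continuous_on_LBINT) (rule g'i)
  have "continuous_on {0..t} (\<lambda>b. LBINT x:{0..b}. g' x)"
    by (rule continuous_on_subset[OF cont']) auto
  moreover have "(LBINT x:{0..s}. g' x) = (LINT u:{0..s}|lborel. g u)" if "s \<in> {0..t}" for s
  proof -
    have "(\<lambda>x. indicator {0..s} x *\<^sub>R g x) = (\<lambda>x. indicator {0..s} x *\<^sub>R g' x)"
      by (rule ext) (rule eqi[OF that])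
    then show ?thesis unfolding set_lebesgue_integral_def by simp
  qed
  moreover have "continuous_on {0..t} (\<lambda>b. LBINT x:{0..b}. g' x) = continuous_on {0..t} (\<lambda>s. LINT u:{0..s}|lborel. g u)"
    by (rule continuous_on_cong) (auto simp: calculation(2))
  ultimately show "continuous_on {0..t} (\<lambda>s. LINT u:{0..s}|lborel. g u)" by simp
qed

lemma int_power:
  assumes "0 \<le> s"
  shows "(LINT u:{0..s}|lborel. c * u ^ k) = c * s ^ Suc k / Suc k"
proof -
  have e: "(\<lambda>u. indicator {0..s} u *\<^sub>R (c * u ^ k)) = (\<lambda>u. c * (u^k * indicator {0..s} u))"
    by (auto simp: indicator_def fun_eq_iff)
  have "(LINT u:{0..s}|lborel. c * u ^ k) = c * (\<integral>x. x^k * indicator {0..s} x \<partial>lborel)"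
    unfolding set_lebesgue_integral_def e by (rule integral_mult_right_zero)
  also have "\<dots> = c * s ^ Suc k / Suc k" using assms by (simp add: integral_power)
  finally show ?thesis .
qed


primrec picard :: "(real \<Rightarrow> (real \<Rightarrow> real) \<Rightarrow> real) \<Rightarrow> real \<Rightarrow> (real \<Rightarrow> 'w \<Rightarrow> real) \<Rightarrow> nat \<Rightarrow> real \<Rightarrow> 'w \<Rightarrow> real" where
  "picard b t w 0 = w"
| "picard b t w (Suc k) = (\<lambda>s \<omega>. w s \<omega> + (LINT u:{0..s}|lborel. b u (restr_path t (\<lambda>r. picard b t w k r \<omega>))))"

lemma sect_meas:
  fixes b :: "real \<Rightarrow> (real \<Rightarrow> real) \<Rightarrow> real"
  assumes bna: "(\<lambda>(u,x). b u x) \<in> borel_measurable (restrict_space borel {0..t} \<Otimes>\<^sub>M Bsig t t)"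
    and x: "x \<in> Cpath t"
  shows "(\<lambda>u. b u x) \<in> borel_measurable (restrict_space borel {0..t})"
proof -
  have "(\<lambda>u. (u, x)) \<in> measurable (restrict_space borel {0..t}) (restrict_space borel {0..t} \<Otimes>\<^sub>M Bsig t t)"
    by (rule measurable_Pair2') (simp add: x)
  from measurable_compose[OF this bna] show ?thesis by simp
qed

lemma int_meas:
  fixes G :: "'w measure" and b :: "real \<Rightarrow> (real \<Rightarrow> real) \<Rightarrow> real"
  assumes bna: "(\<lambda>(u,x). b u x) \<in> borel_measurable (restrict_space borel {0..s} \<Otimes>\<^sub>M Bsig t s)"
    and Rm: "R \<in> measurable G (Bsig t s)"
  shows "(\<lambda>\<omega>. LINT u:{0..s}|lborel. b u (R \<omega>)) \<in> borel_measurable G"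
proof -
  let ?Om = "{z :: 'w \<times> real. snd z \<in> {0..s}}"
  have p1: "(\<lambda>z. snd z) \<in> measurable (restrict_space (G \<Otimes>\<^sub>M lborel) ?Om) (restrict_space borel {0..s})"
  proof (rule measurable_restrict_space2)
    show "snd \<in> space (restrict_space (G \<Otimes>\<^sub>M lborel) ?Om) \<rightarrow> {0..s}"
      by (auto simp: space_restrict_space)
    have "snd \<in> measurable (G \<Otimes>\<^sub>M lborel) borel" using measurable_snd[of G lborel] by simp
    then show "snd \<in> measurable (restrict_space (G \<Otimes>\<^sub>M lborel) ?Om) borel"
      by (rule measurable_restrict_space1)
  qed
  have p2: "(\<lambda>z. R (fst z)) \<in> measurable (restrict_space (G \<Otimes>\<^sub>M lborel) ?Om) (Bsig t s)"
    by (rule measurable_compose[OF measurable_restrict_space1[OF measurable_fst] Rm])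
  have pp: "(\<lambda>z. (snd z, R (fst z))) \<in> measurable (restrict_space (G \<Otimes>\<^sub>M lborel) ?Om) (restrict_space borel {0..s} \<Otimes>\<^sub>M Bsig t s)"
    by (rule measurable_Pair[OF p1 p2])
  have c1: "(\<lambda>z. b (snd z) (R (fst z))) \<in> borel_measurable (restrict_space (G \<Otimes>\<^sub>M lborel) ?Om)"
    using measurable_compose[OF pp bna] by simp
  have Fm: "(\<lambda>z. if snd z \<in> {0..s} then b (snd z) (R (fst z)) else 0) \<in> borel_measurable (G \<Otimes>\<^sub>M lborel)"
    apply (rule measurable_If_restrict_space_iff[THEN iffD2])
    subgoal by measurable
    using c1 by simp
  have "(\<lambda>\<omega>. integral\<^sup>L lborel (\<lambda>u. if u \<in> {0..s} then b u (R \<omega>) else 0)) \<in> borel_measurable G"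
  proof (rule lborel.borel_measurable_lebesgue_integral[of "\<lambda>\<omega> u. if u \<in> {0..s} then b u (R \<omega>) else 0" G])
    have "(\<lambda>(\<omega>, u). if u \<in> {0..s} then b u (R \<omega>) else 0) = (\<lambda>z. if snd z \<in> {0..s} then b (snd z) (R (fst z)) else 0)"
      by (auto simp: fun_eq_iff)
    then show "(\<lambda>(\<omega>, u). if u \<in> {0..s} then b u (R \<omega>) else 0) \<in> borel_measurable (G \<Otimes>\<^sub>M lborel)" using Fm by simp
  qed
  moreover have "(LINT u:{0..s}|lborel. b u (R \<omega>)) = integral\<^sup>L lborel (\<lambda>u. if u \<in> {0..s} then b u (R \<omega>) else 0)" for \<omega>
    unfolding set_lebesgue_integral_def by (rule Bochner_Integration.integral_cong) (auto simp: indicator_def)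
  ultimately show ?thesis by simp
qed

lemma set_int_abs_le:
  fixes f g :: "real \<Rightarrow> real"
  assumes "set_integrable lborel A f" "set_integrable lborel A g" "\<And>u. u \<in> A \<Longrightarrow> \<bar>f u\<bar> \<le> g u"
  shows "\<bar>LINT u:A|lborel. f u\<bar> \<le> (LINT u:A|lborel. g u)"
proof -
  have "\<bar>LINT u:A|lborel. f u\<bar> \<le> (LINT u:A|lborel. norm (f u))"
    using set_integral_norm_bound[OF assms(1)] by simp
  also have "\<dots> \<le> (LINT u:A|lborel. g u)"
    by (rule set_integral_mono) (use assms set_integrable_abs[OF assms(1)] in auto)
  finally show ?thesis .
qed

lemma pow_fact_lim: "(\<lambda>k. (x::real) ^ k / fact k) \<longlonglongrightarrow> 0"
proof -
  have "(\<lambda>k. x ^ k /\<^sub>R fact k) \<longlonglongrightarrow> 0" by (rule summable_LIMSEQ_zero[OF summable_exp_generic])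
  then show ?thesis by (simp add: divide_inverse_commute)
qed


lemma sde_adapted:
  fixes M :: "'w measure" and w X :: "real \<Rightarrow> 'w \<Rightarrow> real" and b :: "real \<Rightarrow> (real \<Rightarrow> real) \<Rightarrow> real"
  assumes t0: "0 \<le> t"
    and bna: "\<And>s. s \<in> {0..t} \<Longrightarrow> (\<lambda>(u,x). b u x) \<in> borel_measurable (restrict_space borel {0..s} \<Otimes>\<^sub>M Bsig t s)"
    and blip: "\<And>s x1 x2 D. s \<in> {0..t} \<Longrightarrow> x1 \<in> Cpath t \<Longrightarrow> x2 \<in> Cpath t \<Longrightarrow>
        (\<forall>u\<in>{0..s}. \<bar>x1 u - x2 u\<bar> \<le> D) \<Longrightarrow> \<bar>b s x1 - b s x2\<bar> \<le> Lc * D"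
    and bgr: "\<And>x. x \<in> Cpath t \<Longrightarrow> \<exists>C. \<forall>s\<in>{0..t}. \<bar>b s x\<bar> \<le> C"
    and Lc: "0 \<le> Lc"
    and wcont: "\<And>\<omega>. \<omega> \<in> space M \<Longrightarrow> continuous_on {0..t} (\<lambda>s. w s \<omega>)"
    and Xsol: "sde_solution M t b w X"
    and s: "s \<in> {0..t}"
  shows "X s \<in> borel_measurable (wfilt M w s)"
proof -
  define Y where "Y = picard b t w"
  have Y0: "Y 0 = w" and YS: "\<And>k. Y (Suc k) = (\<lambda>s \<omega>. w s \<omega> + (LINT u:{0..s}|lborel. b u (restr_path t (\<lambda>r. Y k r \<omega>))))"
    by (simp_all add: Y_def)
  define RX where "RX \<omega> = restr_path t (\<lambda>r. X r \<omega>)" for \<omega>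
  have Xc: "\<And>\<omega>. \<omega> \<in> space M \<Longrightarrow> continuous_on {0..t} (\<lambda>s. X s \<omega>)"
    and Xeq: "\<And>\<omega> s. \<omega> \<in> space M \<Longrightarrow> s \<in> {0..t} \<Longrightarrow> X s \<omega> = (LINT u:{0..s}|lborel. b u (RX \<omega>)) + w s \<omega>"
    and Xint: "\<And>\<omega> s. \<omega> \<in> space M \<Longrightarrow> s \<in> {0..t} \<Longrightarrow> set_integrable lborel {0..s} (\<lambda>u. b u (RX \<omega>))"
    using Xsol unfolding sde_solution_def RX_def by auto
  have RXC: "RX \<omega> \<in> Cpath t" if "\<omega> \<in> space M" for \<omega>
    unfolding RX_def by (rule restr_Cpath[OF Xc[OF that]])
  have bnat: "(\<lambda>(u,x). b u x) \<in> borel_measurable (restrict_space borel {0..t} \<Otimes>\<^sub>M Bsig t t)"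
    using bna[of t] t0 by simp
  define D where "D \<omega> = (SOME D. \<forall>u\<in>{0..t}. \<bar>w u \<omega> - X u \<omega>\<bar> \<le> D)" for \<omega>
  have Dp: "\<forall>u\<in>{0..t}. \<bar>w u \<omega> - X u \<omega>\<bar> \<le> D \<omega>" if "\<omega> \<in> space M" for \<omega>
  proof -
    have "continuous_on {0..t} (\<lambda>u. w u \<omega> - X u \<omega>)"
      by (intro continuous_on_diff wcont Xc that)
    from bounded_cont[OF this] have "\<exists>D. \<forall>u\<in>{0..t}. \<bar>w u \<omega> - X u \<omega>\<bar> \<le> D" .
    then show ?thesis unfolding D_def by (rule someI_ex)
  qed
  have D0: "0 \<le> D \<omega>" if "\<omega> \<in> space M" for \<omega>
    using Dp[OF that] t0 by (meson abs_ge_zero atLeastAtMost_iff order.refl order_trans)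
  have claim: "(\<forall>\<omega>\<in>space M. continuous_on {0..t} (\<lambda>s. Y k s \<omega>)) \<and>
      (\<forall>s\<in>{0..t}. Y k s \<in> borel_measurable (wfilt M w s)) \<and>
      (\<forall>\<omega>\<in>space M. \<forall>u\<in>{0..t}. \<bar>Y k u \<omega> - X u \<omega>\<bar> \<le> D \<omega> * (Lc * u) ^ k / fact k)" for k
  proof (induction k)
    case 0
    show ?case using wcont Dp by (auto simp: Y0 intro: wfilt_meas)
  next
    case (Suc k)
    have IHc: "\<And>\<omega>. \<omega> \<in> space M \<Longrightarrow> continuous_on {0..t} (\<lambda>s. Y k s \<omega>)"
      and IHm: "\<And>s. s \<in> {0..t} \<Longrightarrow> Y k s \<in> borel_measurable (wfilt M w s)"
      and IHb: "\<And>\<omega> u. \<omega> \<in> space M \<Longrightarrow> u \<in> {0..t} \<Longrightarrow> \<bar>Y k u \<omega> - X u \<omega>\<bar> \<le> D \<omega> * (Lc * u) ^ k / fact k"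
      using Suc by auto
    define R where "R \<omega> = restr_path t (\<lambda>r. Y k r \<omega>)" for \<omega>
    have RC: "R \<omega> \<in> Cpath t" if "\<omega> \<in> space M" for \<omega>
      unfolding R_def by (rule restr_Cpath[OF IHc[OF that]])
    have gfacts: "(\<forall>s\<in>{0..t}. set_integrable lborel {0..s} (\<lambda>u. b u (R \<omega>))) \<and>
        continuous_on {0..t} (\<lambda>s. LINT u:{0..s}|lborel. b u (R \<omega>))" if \<omega>: "\<omega> \<in> space M" for \<omega>
    proof -
      obtain C where C: "\<forall>s\<in>{0..t}. \<bar>b s (R \<omega>)\<bar> \<le> C" using bgr[OF RC[OF \<omega>]] by blast
      have gm: "(\<lambda>u. b u (R \<omega>)) \<in> borel_measurable (restrict_space borel {0..t})"
        by (rule sect_meas[OF bnat RC[OF \<omega>]])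
      show ?thesis using sint_facts[OF gm, of C] C by auto
    qed
    have YSeq: "Y (Suc k) s \<omega> = w s \<omega> + (LINT u:{0..s}|lborel. b u (R \<omega>))" for s \<omega>
      by (simp add: YS R_def)
    have cont: "\<forall>\<omega>\<in>space M. continuous_on {0..t} (\<lambda>s. Y (Suc k) s \<omega>)"
    proof
      fix \<omega> assume \<omega>: "\<omega> \<in> space M"
      have "continuous_on {0..t} (\<lambda>s. w s \<omega> + (LINT u:{0..s}|lborel. b u (R \<omega>)))"
        using wcont[OF \<omega>] gfacts[OF \<omega>] by (intro continuous_on_add) auto
      then show "continuous_on {0..t} (\<lambda>s. Y (Suc k) s \<omega>)" by (simp add: YSeq)
    qed
    have meas: "\<forall>s\<in>{0..t}. Y (Suc k) s \<in> borel_measurable (wfilt M w s)"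
    proof
      fix s assume s: "s \<in> {0..t}"
      have Rm: "R \<in> measurable (wfilt M w s) (Bsig t s)"
      proof (rule measurable_sigma_sets[OF Bsig_sets Bsig_gens_Pow])
        show "R \<in> space (wfilt M w s) \<rightarrow> Cpath t" using RC by auto
        fix y assume "y \<in> {{x \<in> Cpath t. x u \<in> A} | u A. u \<in> {0..s} \<and> A \<in> sets (borel :: real measure)}"
        then obtain u A where y: "y = {x \<in> Cpath t. x u \<in> A}" "u \<in> {0..s}" "A \<in> sets (borel :: real measure)"
          by auto
        have ut: "u \<in> {0..t}" using y(2) s by auto
        have "R -` y \<inter> space (wfilt M w s) = Y k u -` A \<inter> space (wfilt M w u)"
          using RC ut by (auto simp: y(1) R_def)
        also have "\<dots> \<in> sets (wfilt M w u)" using measurable_sets[OF IHm[OF ut] y(3)] .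
        also have "\<dots> \<subseteq> sets (wfilt M w s)" using y(2) by (intro wfilt_mono) auto
        finally show "R -` y \<inter> space (wfilt M w s) \<in> sets (wfilt M w s)" .
      qed
      have "(\<lambda>\<omega>. LINT u:{0..s}|lborel. b u (R \<omega>)) \<in> borel_measurable (wfilt M w s)"
        by (rule int_meas[OF bna[OF s] Rm])
      moreover have "w s \<in> borel_measurable (wfilt M w s)" using s by (intro wfilt_meas) auto
      ultimately have "(\<lambda>\<omega>. w s \<omega> + (LINT u:{0..s}|lborel. b u (R \<omega>))) \<in> borel_measurable (wfilt M w s)"
        by measurable
      then show "Y (Suc k) s \<in> borel_measurable (wfilt M w s)" by (simp add: YSeq[abs_def])
    qed
    have bound: "\<forall>\<omega>\<in>space M. \<forall>s\<in>{0..t}. \<bar>Y (Suc k) s \<omega> - X s \<omega>\<bar> \<le> D \<omega> * (Lc * s) ^ Suc k / fact (Suc k)"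
    proof (intro ballI)
      fix \<omega> s assume \<omega>: "\<omega> \<in> space M" and s: "s \<in> {0..t}"
      define c where "c = Lc * D \<omega> * Lc ^ k / fact k"
      have i1: "set_integrable lborel {0..s} (\<lambda>u. b u (R \<omega>))" using gfacts[OF \<omega>] s by auto
      have i2: "set_integrable lborel {0..s} (\<lambda>u. b u (RX \<omega>))" using Xint[OF \<omega> s] .
      have i3: "set_integrable lborel {0..s} (\<lambda>u. c * u ^ k)"
        by (rule borel_integrable_atLeastAtMost') (intro continuous_intros)
      have "Y (Suc k) s \<omega> - X s \<omega> = (LINT u:{0..s}|lborel. b u (R \<omega>)) - (LINT u:{0..s}|lborel. b u (RX \<omega>))"
        using Xeq[OF \<omega> s] YSeq[of s \<omega>] by simp
      also have "\<dots> = (LINT u:{0..s}|lborel. b u (R \<omega>) - b u (RX \<omega>))"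
        using set_integral_diff(2)[OF i1 i2] by simp
      finally have eq: "Y (Suc k) s \<omega> - X s \<omega> = (LINT u:{0..s}|lborel. b u (R \<omega>) - b u (RX \<omega>))" .
      have pw: "\<bar>b u (R \<omega>) - b u (RX \<omega>)\<bar> \<le> c * u ^ k" if u: "u \<in> {0..s}" for u
      proof -
        have ut: "u \<in> {0..t}" using u s by auto
        have "\<forall>v\<in>{0..u}. \<bar>R \<omega> v - RX \<omega> v\<bar> \<le> D \<omega> * (Lc * u) ^ k / fact k"
        proof
          fix v assume v: "v \<in> {0..u}"
          then have vt: "v \<in> {0..t}" using ut by auto
          have "\<bar>R \<omega> v - RX \<omega> v\<bar> = \<bar>Y k v \<omega> - X v \<omega>\<bar>" using vt by (simp add: R_def RX_def)
          also have "\<dots> \<le> D \<omega> * (Lc * v) ^ k / fact k" by (rule IHb[OF \<omega> vt])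
          also have "\<dots> \<le> D \<omega> * (Lc * u) ^ k / fact k"
          proof -
            have "(Lc * v) ^ k \<le> (Lc * u) ^ k"
              using v Lc by (intro power_mono mult_left_mono) auto
            then show ?thesis using D0[OF \<omega>] by (intro divide_right_mono mult_left_mono) auto
          qed
          finally show "\<bar>R \<omega> v - RX \<omega> v\<bar> \<le> D \<omega> * (Lc * u) ^ k / fact k" .
        qed
        then have "\<bar>b u (R \<omega>) - b u (RX \<omega>)\<bar> \<le> Lc * (D \<omega> * (Lc * u) ^ k / fact k)"
          by (rule blip[OF ut RC[OF \<omega>] RXC[OF \<omega>]])
        also have "\<dots> = c * u ^ k" by (simp add: c_def power_mult_distrib)
        finally show ?thesis .
      qed
      have "\<bar>Y (Suc k) s \<omega> - X s \<omega>\<bar> \<le> (LINT u:{0..s}|lborel. c * u ^ k)"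
        unfolding eq by (rule set_int_abs_le[OF set_integral_diff(1)[OF i1 i2] i3 pw])
      also have "\<dots> = c * s ^ Suc k / Suc k" using s by (intro int_power) auto
      also have "\<dots> = D \<omega> * (Lc * s) ^ Suc k / fact (Suc k)"
        by (simp add: c_def power_mult_distrib field_simps)
      finally show "\<bar>Y (Suc k) s \<omega> - X s \<omega>\<bar> \<le> D \<omega> * (Lc * s) ^ Suc k / fact (Suc k)" .
    qed
    show ?case using cont meas bound by blast
  qed
  have lim: "(\<lambda>k. Y k s \<omega>) \<longlonglongrightarrow> X s \<omega>" if \<omega>: "\<omega> \<in> space (wfilt M w s)" for \<omega>
  proof -
    have \<omega>': "\<omega> \<in> space M" using \<omega> by simp
    have "(\<lambda>k. D \<omega> * ((Lc * s) ^ k / fact k)) \<longlonglongrightarrow> D \<omega> * 0"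
      by (intro tendsto_mult tendsto_const pow_fact_lim)
    then have g0: "(\<lambda>k. D \<omega> * (Lc * s) ^ k / fact k) \<longlonglongrightarrow> 0" by simp
    have "(\<lambda>k. Y k s \<omega> - X s \<omega>) \<longlonglongrightarrow> 0"
      by (rule Lim_null_comparison[OF _ g0]) (use claim \<omega>' s in auto)
    then have "(\<lambda>k. (Y k s \<omega> - X s \<omega>) + X s \<omega>) \<longlonglongrightarrow> 0 + X s \<omega>" by (intro tendsto_add tendsto_const)
    then show ?thesis by simp
  qed
  show ?thesis
    by (rule borel_measurable_LIMSEQ_real[OF lim]) (use claim s in auto)
qed


lemma lint_bound:
  fixes g :: "real \<Rightarrow> real"
  assumes A: "A \<in> sets M" "emeasure M A < \<infinity>"
    and g: "\<And>u. u \<in> A \<Longrightarrow> 0 \<le> g u \<and> g u \<le> D"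
  shows "0 \<le> (LINT u:A|M. g u) \<and> (LINT u:A|M. g u) \<le> D * measure M A"
proof
  show "0 \<le> (LINT u:A|M. g u)"
    unfolding set_lebesgue_integral_def by (rule Bochner_Integration.integral_nonneg) (auto simp: g indicator_def)
  have D0: "0 \<le> D \<or> A = {}" using g by (cases "A = {}") (auto intro: order_trans)
  show "(LINT u:A|M. g u) \<le> D * measure M A"
  proof (cases "set_integrable M A g")
    case True
    have ci: "set_integrable M A (\<lambda>_. D)"
      unfolding set_integrable_def using integrable_real_indicator[OF A]
      by (rule integrable_scaleR_left)
    have "(LINT u:A|M. g u) \<le> (LINT u:A|M. D)" by (rule set_integral_mono[OF True ci]) (use g in auto)
    also have "\<dots> = D * measure M A" using A by (subst set_integral_const) (auto simp: less_top)
    finally show ?thesis .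
  next
    case False
    then have "(LINT u:A|M. g u) = 0"
      unfolding set_integrable_def set_lebesgue_integral_def by (rule not_integrable_integral_eq)
    then show ?thesis using D0 by auto
  qed
qed

lemma restr_if_meas:
  fixes g :: "real \<Rightarrow> 'x \<Rightarrow> real"
  assumes bna: "(\<lambda>(u,x). g u x) \<in> borel_measurable (restrict_space borel {0..s} \<Otimes>\<^sub>M N)"
  shows "(\<lambda>(x,u). if u \<in> {0..s} then g u x else 0) \<in> borel_measurable (N \<Otimes>\<^sub>M lborel)"
proof -
  let ?Om = "{z :: 'x \<times> real. snd z \<in> {0..s}}"
  have p1: "(\<lambda>z. snd z) \<in> measurable (restrict_space (N \<Otimes>\<^sub>M lborel) ?Om) (restrict_space borel {0..s})"
  proof (rule measurable_restrict_space2)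
    show "snd \<in> space (restrict_space (N \<Otimes>\<^sub>M lborel) ?Om) \<rightarrow> {0..s}"
      by (auto simp: space_restrict_space)
    have "snd \<in> measurable (N \<Otimes>\<^sub>M lborel) borel" using measurable_snd[of N lborel] by simp
    then show "snd \<in> measurable (restrict_space (N \<Otimes>\<^sub>M lborel) ?Om) borel"
      by (rule measurable_restrict_space1)
  qed
  have p2: "(\<lambda>z. fst z) \<in> measurable (restrict_space (N \<Otimes>\<^sub>M lborel) ?Om) N"
    by (rule measurable_restrict_space1[OF measurable_fst])
  have pp: "(\<lambda>z. (snd z, fst z)) \<in> measurable (restrict_space (N \<Otimes>\<^sub>M lborel) ?Om) (restrict_space borel {0..s} \<Otimes>\<^sub>M N)"
    by (rule measurable_Pair[OF p1 p2])
  have c1: "(\<lambda>z. g (snd z) (fst z)) \<in> borel_measurable (restrict_space (N \<Otimes>\<^sub>M lborel) ?Om)"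
    using measurable_compose[OF pp bna] by simp
  have Fm: "(\<lambda>z. if snd z \<in> {0..s} then g (snd z) (fst z) else 0) \<in> borel_measurable (N \<Otimes>\<^sub>M lborel)"
    apply (rule measurable_If_restrict_space_iff[THEN iffD2])
    subgoal by measurable
    using c1 by simp
  have "(\<lambda>(x,u). if u \<in> {0..s} then g u x else 0) = (\<lambda>z. if snd z \<in> {0..s} then g (snd z) (fst z) else 0)"
    by (auto simp: fun_eq_iff)
  then show ?thesis using Fm by simp
qed

lemma lint_sq_meas:
  fixes H :: "real \<Rightarrow> 'x \<Rightarrow> real"
  assumes Hm: "(\<lambda>(x,s). if s \<in> {0..T} then H s x else 0) \<in> borel_measurable (P \<Otimes>\<^sub>M lborel)"
  shows "(\<lambda>x. LINT u:{0..T}|lborel. (H u x)\<^sup>2) \<in> borel_measurable P"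
proof -
  define Hh where "Hh x s = (if s \<in> {0..T} then H s x else 0)" for x s
  have Jeq: "(LINT u:{0..T}|lborel. (H u x)\<^sup>2) = integral\<^sup>L lborel (\<lambda>s. (Hh x s)\<^sup>2)" for x
    unfolding set_lebesgue_integral_def by (intro Bochner_Integration.integral_cong) (auto simp: Hh_def indicator_def)
  have "(\<lambda>(x,s). (Hh x s)\<^sup>2) \<in> borel_measurable (P \<Otimes>\<^sub>M lborel)" using Hm by (simp add: case_prod_beta Hh_def) measurable
  then have "(\<lambda>x. integral\<^sup>L lborel (\<lambda>s. (Hh x s)\<^sup>2)) \<in> borel_measurable P"
    by (rule lborel.borel_measurable_lebesgue_integral[where f="\<lambda>x s. (Hh x s)\<^sup>2", simplified])
  then show ?thesis by (simp add: Jeq)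
qed

lemma scale_Cpath: "x \<in> Cpath t \<Longrightarrow> (\<lambda>u. e * x u) \<in> Cpath t"
  unfolding Cpath_def by (auto intro: continuous_intros)

lemma scale_meas: "(\<lambda>x u. e * x u) \<in> measurable (Bsig t s) (Bsig t s)"
proof (rule measurable_sigma_sets[OF Bsig_sets Bsig_gens_Pow])
  show "(\<lambda>x u. e * x u) \<in> space (Bsig t s) \<rightarrow> Cpath t" using scale_Cpath by auto
  fix y assume "y \<in> {{x \<in> Cpath t. x u \<in> A} | u A. u \<in> {0..s} \<and> A \<in> sets (borel :: real measure)}"
  then obtain u A where y: "y = {x \<in> Cpath t. x u \<in> A}" "u \<in> {0..s}" "A \<in> sets (borel :: real measure)"
    by auto
  have m: "(\<lambda>x. e * x u) \<in> borel_measurable (Bsig t s)" using coord_meas[OF y(2)] by measurable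
  have "(\<lambda>x u. e * x u) -` y \<inter> space (Bsig t s) = (\<lambda>x. e * x u) -` A \<inter> space (Bsig t s)"
    using scale_Cpath by (auto simp: y(1))
  also have "\<dots> \<in> sets (Bsig t s)" by (rule measurable_sets[OF m y(3)])
  finally show "(\<lambda>x u. e * x u) -` y \<inter> space (Bsig t s) \<in> sets (Bsig t s)" .
qed

lemma scaled_na:
  fixes a :: "real \<Rightarrow> (real \<Rightarrow> real) \<Rightarrow> 'a \<Rightarrow> real"
  assumes na: "(\<lambda>(u,x). a u x \<beta>) \<in> borel_measurable (restrict_space borel {0..s} \<Otimes>\<^sub>M Bsig t s)"
  shows "(\<lambda>(u,x). scaled e a u x \<beta>) \<in> borel_measurable (restrict_space borel {0..s} \<Otimes>\<^sub>M Bsig t s)"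
proof -
  have pm: "(\<lambda>z. (fst z, (\<lambda>u. e * snd z u))) \<in> measurable (restrict_space borel {0..s} \<Otimes>\<^sub>M Bsig t s) (restrict_space borel {0..s} \<Otimes>\<^sub>M Bsig t s)"
    by (rule measurable_Pair[OF measurable_fst measurable_compose[OF measurable_snd scale_meas]])
  have "(\<lambda>z. a (fst z) (\<lambda>u. e * snd z u) \<beta>) \<in> borel_measurable (restrict_space borel {0..s} \<Otimes>\<^sub>M Bsig t s)"
    using measurable_compose[OF pm na] by simp
  then have "(\<lambda>z. a (fst z) (\<lambda>u. e * snd z u) \<beta> / e) \<in> borel_measurable (restrict_space borel {0..s} \<Otimes>\<^sub>M Bsig t s)"
    by measurable
  then show ?thesis by (simp add: scaled_def case_prod_beta)
qed


lemma imeas_facts: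
  fixes k :: "real \<Rightarrow> real"
  assumes k_mono: "mono k" and k_rc: "\<And>u. continuous (at_right u) k" and s: "s \<in> {0..t}"
  shows "emeasure (interval_measure k) {0..s} < \<infinity>" "measure (interval_measure k) {0..s} \<le> k t - k (-1)"
proof -
  have mk: "\<And>x y. x \<le> y \<Longrightarrow> k x \<le> k y" using k_mono by (simp add: monoD)
  have "emeasure (interval_measure k) {0..s} \<le> emeasure (interval_measure k) {-1<..t}"
    using s by (intro emeasure_mono) auto
  also have "\<dots> = ennreal (k t - k (-1))" using s by (subst emeasure_interval_measure_Ioc) (auto intro: mk k_rc)
  finally have le: "emeasure (interval_measure k) {0..s} \<le> ennreal (k t - k (-1))" .
  then show "emeasure (interval_measure k) {0..s} < \<infinity>" using le_less_trans by fastforce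
  have "k (-1) \<le> k t" using s by (intro mk) auto
  then show "measure (interval_measure k) {0..s} \<le> k t - k (-1)"
    using le unfolding measure_def by (simp add: enn2real_leI)
qed

lemma lint_k:
  fixes k g :: "real \<Rightarrow> real"
  assumes k_mono: "mono k" and k_rc: "\<And>u. continuous (at_right u) k" and s: "s \<in> {0..t}"
    and g: "\<And>u. u \<in> {0..s} \<Longrightarrow> 0 \<le> g u \<and> g u \<le> D"
  shows "0 \<le> (LINT u:{0..s}|interval_measure k. g u) \<and> (LINT u:{0..s}|interval_measure k. g u) \<le> D * (k t - k (-1))"
proof -
  have D0: "0 \<le> D" using g[of 0] s by auto
  have lb: "0 \<le> (LINT u:{0..s}|interval_measure k. g u) \<and> (LINT u:{0..s}|interval_measure k. g u) \<le> D * measure (interval_measure k) {0..s}"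
    by (rule lint_bound) (use imeas_facts[OF k_mono k_rc s] g in auto)
  have "D * measure (interval_measure k) {0..s} \<le> D * (k t - k (-1))"
    using imeas_facts[OF k_mono k_rc s] D0 by (intro mult_left_mono) auto
  then show ?thesis using lb by linarith
qed

lemma b_props:
  fixes a :: "real \<Rightarrow> (real \<Rightarrow> real) \<Rightarrow> 'a \<Rightarrow> real" and k :: "real \<Rightarrow> real"
  assumes k_mono: "mono k" and k_rc: "\<And>u. continuous (at_right u) k"
    and a_lip: "\<And>s x1 x2 \<beta>. s \<in> {0..t} \<Longrightarrow> x1 \<in> Cpath t \<Longrightarrow> x2 \<in> Cpath t \<Longrightarrow> \<beta> \<in> \<A> \<Longrightarrow>
        \<bar>a s x1 \<beta> - a s x2 \<beta>\<bar>
          \<le> L1 * (LINT u:{0..s}|interval_measure k. \<bar>x1 u - x2 u\<bar>) + L2 * \<bar>x1 s - x2 s\<bar>"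
    and a_growth: "\<And>s x \<beta>. s \<in> {0..t} \<Longrightarrow> x \<in> Cpath t \<Longrightarrow> \<beta> \<in> \<A> \<Longrightarrow>
        \<bar>a s x \<beta>\<bar> \<le> L1 * (LINT u:{0..s}|interval_measure k. 1 + \<bar>x u\<bar>) + L2 * (1 + \<bar>x s\<bar>)"
    and e: "e > 0" and \<beta>: "\<beta> \<in> \<A>"
  shows "\<And>s x1 x2 D. s \<in> {0..t} \<Longrightarrow> x1 \<in> Cpath t \<Longrightarrow> x2 \<in> Cpath t \<Longrightarrow>
        (\<forall>u\<in>{0..s}. \<bar>x1 u - x2 u\<bar> \<le> D) \<Longrightarrow>
        \<bar>scaled e a s x1 \<beta> - scaled e a s x2 \<beta>\<bar> \<le> (\<bar>L1\<bar> * (k t - k (-1)) + \<bar>L2\<bar>) * D"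
    and "\<And>x. x \<in> Cpath t \<Longrightarrow> \<exists>C. \<forall>s\<in>{0..t}. \<bar>scaled e a s x \<beta>\<bar> \<le> C"
    and "0 \<le> t \<Longrightarrow> 0 \<le> \<bar>L1\<bar> * (k t - k (-1)) + \<bar>L2\<bar>"
proof -
  define Km where "Km = k t - k (-1)"
  show "0 \<le> \<bar>L1\<bar> * (k t - k (-1)) + \<bar>L2\<bar>" if "0 \<le> t"
  proof -
    have "k (-1) \<le> k t" using that k_mono by (simp add: monoD)
    then show ?thesis by simp
  qed
  fix s x1 x2 D
  assume s: "s \<in> {0..t}" and x1: "x1 \<in> Cpath t" and x2: "x2 \<in> Cpath t" and D: "\<forall>u\<in>{0..s}. \<bar>x1 u - x2 u\<bar> \<le> D"
  define y1 where "y1 = (\<lambda>u. e * x1 u)"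
  define y2 where "y2 = (\<lambda>u. e * x2 u)"
  have y1: "y1 \<in> Cpath t" and y2: "y2 \<in> Cpath t" using scale_Cpath x1 x2 by (auto simp: y1_def y2_def)
  have D0: "0 \<le> D" using D s by (meson abs_ge_zero atLeastAtMost_iff order.refl order_trans)
  have dif: "\<bar>y1 u - y2 u\<bar> = e * \<bar>x1 u - x2 u\<bar>" for u
    using e by (simp add: y1_def y2_def abs_mult right_diff_distrib[symmetric])
  have I: "0 \<le> (LINT u:{0..s}|interval_measure k. \<bar>y1 u - y2 u\<bar>) \<and> (LINT u:{0..s}|interval_measure k. \<bar>y1 u - y2 u\<bar>) \<le> (e * D) * Km"
    unfolding Km_def by (rule lint_k[OF k_mono k_rc s]) (use D e in \<open>auto simp: dif intro: mult_left_mono\<close>)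
  have "\<bar>a s y1 \<beta> - a s y2 \<beta>\<bar> \<le> L1 * (LINT u:{0..s}|interval_measure k. \<bar>y1 u - y2 u\<bar>) + L2 * \<bar>y1 s - y2 s\<bar>"
    by (rule a_lip[OF s y1 y2 \<beta>])
  also have "\<dots> \<le> \<bar>L1\<bar> * ((e * D) * Km) + \<bar>L2\<bar> * (e * D)"
  proof (rule add_mono)
    have "L1 * (LINT u:{0..s}|interval_measure k. \<bar>y1 u - y2 u\<bar>) \<le> \<bar>L1\<bar> * (LINT u:{0..s}|interval_measure k. \<bar>y1 u - y2 u\<bar>)"
      using I by (intro mult_right_mono) auto
    also have "\<dots> \<le> \<bar>L1\<bar> * ((e * D) * Km)" using I by (intro mult_left_mono) auto
    finally show "L1 * (LINT u:{0..s}|interval_measure k. \<bar>y1 u - y2 u\<bar>) \<le> \<bar>L1\<bar> * ((e * D) * Km)" .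
    have "\<bar>y1 s - y2 s\<bar> \<le> e * D" using D s e by (simp add: dif)
    then show "L2 * \<bar>y1 s - y2 s\<bar> \<le> \<bar>L2\<bar> * (e * D)"
      by (meson abs_ge_self abs_ge_zero mult_mono order_trans)
  qed
  also have "\<dots> = e * ((\<bar>L1\<bar> * Km + \<bar>L2\<bar>) * D)" by (simp add: algebra_simps)
  finally have "\<bar>a s y1 \<beta> - a s y2 \<beta>\<bar> / e \<le> (\<bar>L1\<bar> * Km + \<bar>L2\<bar>) * D"
    using e by (simp add: divide_le_eq mult.commute)
  then show "\<bar>scaled e a s x1 \<beta> - scaled e a s x2 \<beta>\<bar> \<le> (\<bar>L1\<bar> * (k t - k (-1)) + \<bar>L2\<bar>) * D"
    unfolding scaled_def Km_def y1_def y2_def using e by (simp add: diff_divide_distrib[symmetric])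
next
  fix x assume x: "x \<in> Cpath t"
  define Km where "Km = k t - k (-1)"
  define y where "y = (\<lambda>u. e * x u)"
  have y: "y \<in> Cpath t" using scale_Cpath x by (auto simp: y_def)
  obtain R where R: "\<forall>u\<in>{0..t}. \<bar>y u\<bar> \<le> R" using bounded_cont[OF Cpath_cont[OF y]] by blast
  have "\<bar>a s y \<beta>\<bar> \<le> \<bar>L1\<bar> * ((1 + R) * Km) + \<bar>L2\<bar> * (1 + R)" if s: "s \<in> {0..t}" for s
  proof -
    have I: "0 \<le> (LINT u:{0..s}|interval_measure k. 1 + \<bar>y u\<bar>) \<and> (LINT u:{0..s}|interval_measure k. 1 + \<bar>y u\<bar>) \<le> (1 + R) * Km"
      unfolding Km_def by (rule lint_k[OF k_mono k_rc s]) (use R s in auto)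
    have "\<bar>a s y \<beta>\<bar> \<le> L1 * (LINT u:{0..s}|interval_measure k. 1 + \<bar>y u\<bar>) + L2 * (1 + \<bar>y s\<bar>)"
      by (rule a_growth[OF s y \<beta>])
    also have "\<dots> \<le> \<bar>L1\<bar> * ((1 + R) * Km) + \<bar>L2\<bar> * (1 + R)"
    proof (rule add_mono)
      have "L1 * (LINT u:{0..s}|interval_measure k. 1 + \<bar>y u\<bar>) \<le> \<bar>L1\<bar> * (LINT u:{0..s}|interval_measure k. 1 + \<bar>y u\<bar>)"
        using I by (intro mult_right_mono) auto
      also have "\<dots> \<le> \<bar>L1\<bar> * ((1 + R) * Km)" using I by (intro mult_left_mono) auto
      finally show "L1 * (LINT u:{0..s}|interval_measure k. 1 + \<bar>y u\<bar>) \<le> \<bar>L1\<bar> * ((1 + R) * Km)" .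
      have "1 + \<bar>y s\<bar> \<le> 1 + R" using R s by auto
      then show "L2 * (1 + \<bar>y s\<bar>) \<le> \<bar>L2\<bar> * (1 + R)"
        by (meson abs_ge_self abs_ge_zero add_nonneg_nonneg mult_mono order_trans zero_le_one)
    qed
    finally show ?thesis .
  qed
  then have "\<forall>s\<in>{0..t}. \<bar>scaled e a s x \<beta>\<bar> \<le> (\<bar>L1\<bar> * ((1 + R) * Km) + \<bar>L2\<bar> * (1 + R)) / e"
    using e by (auto simp: scaled_def y_def divide_right_mono)
  then show "\<exists>C. \<forall>s\<in>{0..t}. \<bar>scaled e a s x \<beta>\<bar> \<le> C" by blast
qed


lemma per_n:
  fixes t L1 L2 B e :: real
    and \<A> :: "'a set"
    and a h :: "real \<Rightarrow> (real \<Rightarrow> real) \<Rightarrow> 'a \<Rightarrow> real"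
    and k :: "real \<Rightarrow> real"
    and \<beta> :: "'a"
    and M :: "'w measure"
    and w X :: "real \<Rightarrow> 'w \<Rightarrow> real"
    and Z :: "(real \<Rightarrow> real) \<Rightarrow> real"
  assumes t_pos: "t > 0"
    and a_na: "nonanticipative t \<A> a"
    and k_mono: "mono k" and k_rc: "\<And>u. continuous (at_right u) k"
    and a_lip: "\<And>s x1 x2 \<beta>. s \<in> {0..t} \<Longrightarrow> x1 \<in> Cpath t \<Longrightarrow> x2 \<in> Cpath t \<Longrightarrow> \<beta> \<in> \<A> \<Longrightarrow>
        \<bar>a s x1 \<beta> - a s x2 \<beta>\<bar>
          \<le> L1 * (LINT u:{0..s}|interval_measure k. \<bar>x1 u - x2 u\<bar>) + L2 * \<bar>x1 s - x2 s\<bar>"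
    and a_growth: "\<And>s x \<beta>. s \<in> {0..t} \<Longrightarrow> x \<in> Cpath t \<Longrightarrow> \<beta> \<in> \<A> \<Longrightarrow>
        \<bar>a s x \<beta>\<bar> \<le> L1 * (LINT u:{0..s}|interval_measure k. 1 + \<bar>x u\<bar>) + L2 * (1 + \<bar>x s\<bar>)"
    and e: "e > 0" and \<beta>: "\<beta> \<in> \<A>"
    and hB: "\<And>s x \<gamma>. s \<in> {0..t} \<Longrightarrow> x \<in> Cpath t \<Longrightarrow> \<gamma> \<in> \<A> \<Longrightarrow> \<bar>h s x \<gamma>\<bar> \<le> B"
    and h_na: "nonanticipative t \<A> h"
    and BM: "brownian_motion M t w"
    and X_sol: "sde_solution M t (\<lambda>s x. scaled e a s x \<beta>) w X"
    and Z_ito: "is_ito_integral (path_law M t X) (Bsig t) t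
        (\<lambda>s x. x s - (LINT u:{0..s}|lborel. scaled e a u x \<beta>))
        (\<lambda>s x. scaled e h s x \<beta>) Z"
  shows "(\<lambda>x. ennreal (exp (e * Z x - e\<^sup>2 / 2 * (LINT u:{0..t}|lborel. (scaled e h u x \<beta>)\<^sup>2))))
            \<in> borel_measurable (path_law M t X)"
    and "(\<integral>\<^sup>+x. ennreal (exp (e * Z x - e\<^sup>2 / 2 * (LINT u:{0..t}|lborel. (scaled e h u x \<beta>)\<^sup>2))) ^ 2 \<partial>path_law M t X)
          \<le> ennreal (exp (3 * t * B\<^sup>2))"
proof -
  define b where "b = (\<lambda>s x. scaled e a s x \<beta>)"
  define H where "H = (\<lambda>s x. scaled e h s x \<beta>)"
  define f where "f = (\<lambda>\<omega>. restr_path t (\<lambda>r. X r \<omega>))"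
  define P where "P = path_law M t X"
  define Wp where "Wp = (\<lambda>s x. x s - (LINT u:{0..s}|lborel. b u x))"
  define J where "J x = (LINT u:{0..t}|lborel. (H u x)\<^sup>2)" for x
  define Lc where "Lc = \<bar>L1\<bar> * (k t - k (-1)) + \<bar>L2\<bar>"
  have t0: "0 \<le> t" using t_pos by simp
  have PS: "prob_space M" and wcont: "\<And>\<omega>. \<omega> \<in> space M \<Longrightarrow> continuous_on {0..t} (\<lambda>s. w s \<omega>)"
    and w0: "\<And>\<omega>. \<omega> \<in> space M \<Longrightarrow> w 0 \<omega> = 0"
    and wm: "\<And>s. s \<in> {0..t} \<Longrightarrow> w s \<in> borel_measurable M"
    using BM unfolding brownian_motion_def by auto
  have bna: "(\<lambda>(u,x). b u x) \<in> borel_measurable (restrict_space borel {0..s} \<Otimes>\<^sub>M Bsig t s)" if "s \<in> {0..t}" for s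
    unfolding b_def by (rule scaled_na) (use a_na \<beta> that in \<open>auto simp: nonanticipative_def\<close>)
  have bp: "\<And>s x1 x2 D. s \<in> {0..t} \<Longrightarrow> x1 \<in> Cpath t \<Longrightarrow> x2 \<in> Cpath t \<Longrightarrow>
        (\<forall>u\<in>{0..s}. \<bar>x1 u - x2 u\<bar> \<le> D) \<Longrightarrow> \<bar>b s x1 - b s x2\<bar> \<le> Lc * D"
    "\<And>x. x \<in> Cpath t \<Longrightarrow> \<exists>C. \<forall>s\<in>{0..t}. \<bar>b s x\<bar> \<le> C" "0 \<le> Lc"
    using b_props[OF k_mono k_rc a_lip a_growth e \<beta>] t0 unfolding b_def Lc_def by auto
  have Xs: "sde_solution M t b w X" using X_sol by (simp add: b_def)
  have Xad: "X s \<in> borel_measurable (wfilt M w s)" if "s \<in> {0..t}" for s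
    by (rule sde_adapted[OF t0 bna bp(1) bp(2) bp(3) wcont Xs that])
  have Xc: "\<And>\<omega>. \<omega> \<in> space M \<Longrightarrow> continuous_on {0..t} (\<lambda>s. X s \<omega>)"
    and Xeq: "\<And>\<omega> s. \<omega> \<in> space M \<Longrightarrow> s \<in> {0..t} \<Longrightarrow> X s \<omega> = (LINT u:{0..s}|lborel. b u (f \<omega>)) + w s \<omega>"
    using Xs unfolding sde_solution_def f_def by auto
  have fC: "f \<omega> \<in> Cpath t" if "\<omega> \<in> space M" for \<omega>
    unfolding f_def by (rule restr_Cpath[OF Xc[OF that]])
  have fad: "f \<in> measurable (wfilt M w p) (Bsig t p)" if p: "p \<in> {0..t}" for p
  proof (rule measurable_sigma_sets[OF Bsig_sets Bsig_gens_Pow])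
    show "f \<in> space (wfilt M w p) \<rightarrow> Cpath t" using fC by auto
    fix y assume "y \<in> {{x \<in> Cpath t. x u \<in> A} | u A. u \<in> {0..p} \<and> A \<in> sets (borel :: real measure)}"
    then obtain u A where y: "y = {x \<in> Cpath t. x u \<in> A}" "u \<in> {0..p}" "A \<in> sets (borel :: real measure)"
      by auto
    have ut: "u \<in> {0..t}" using y(2) p by auto
    have "f -` y \<inter> space (wfilt M w p) = X u -` A \<inter> space (wfilt M w u)"
      using fC ut by (auto simp: y(1) f_def)
    also have "\<dots> \<in> sets (wfilt M w u)" using measurable_sets[OF Xad[OF ut] y(3)] .
    also have "\<dots> \<subseteq> sets (wfilt M w p)" using y(2) by (intro wfilt_mono) auto
    finally show "f -` y \<inter> space (wfilt M w p) \<in> sets (wfilt M w p)" .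
  qed
  have wsub: "sets (wfilt M w s) \<subseteq> sets M" if "s \<in> {0..t}" for s
    by (rule wfilt_subM) (use wm that in auto)
  have fM: "f \<in> measurable M (Bsig t t)"
    using meas_sub[OF fad[of t]] wsub[of t] t0 by auto
  have Pdef: "P = distr M (Bsig t t) f" by (simp add: P_def path_law_def f_def)
  interpret PS: prob_space M by (rule PS)
  have PP: "prob_space P" unfolding Pdef by (rule PS.prob_space_distr[OF fM])
  have spP: "space P = Cpath t" by (simp add: Pdef)
  have setsP: "sets P = sets (Bsig t t)" by (simp add: Pdef)
  have Wm: "Wp s \<in> borel_measurable (Bsig t s)" if "0 \<le> s" "s \<le> t" for s
  proof -
    have "(\<lambda>x. LINT u:{0..s}|lborel. b u x) \<in> borel_measurable (Bsig t s)"
      using int_meas[OF bna measurable_ident, of s] that by simp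
    moreover have "(\<lambda>x. x s) \<in> borel_measurable (Bsig t s)" using coord_meas[of s s t] that by simp
    ultimately show ?thesis unfolding Wp_def by measurable
  qed
  have WpP: "Wp s \<in> borel_measurable P" if "0 \<le> s" "s \<le> t" for s
    using meas_sub[OF Wm[OF that]] Bsig_mono[of s t t] that spP setsP by auto
  have Wf: "Wp s (f \<omega>) = w s \<omega>" if "\<omega> \<in> space M" "s \<in> {0..t}" for s \<omega>
    using Xeq[OF that] that by (simp add: Wp_def f_def)
  have ind: "measure P (A \<inter> ((\<lambda>x. Wp q x - Wp p x) -` C \<inter> space P))
          = measure P A * measure P ((\<lambda>x. Wp q x - Wp p x) -` C \<inter> space P)"
    if pq: "0 \<le> p" "p < q" "q \<le> t" and A: "A \<in> sets (Bsig t p)" and C: "C \<in> sets borel" for p q A C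
  proof -
    have AP: "A \<in> sets (Bsig t t)" using A Bsig_mono[of p t t] pq by auto
    have Dm: "(\<lambda>x. Wp q x - Wp p x) \<in> borel_measurable P" using WpP pq by auto
    have DP: "(\<lambda>x. Wp q x - Wp p x) -` C \<inter> space P \<in> sets (Bsig t t)"
      using measurable_sets[OF Dm C] setsP by simp
    have pre1: "f -` (A \<inter> ((\<lambda>x. Wp q x - Wp p x) -` C \<inter> space P)) \<inter> space M
        = (f -` A \<inter> space M) \<inter> ((\<lambda>\<omega>. w q \<omega> - w p \<omega>) -` C \<inter> space M)"
      using fC Wf pq by (auto simp: spP)
    have pre2: "f -` ((\<lambda>x. Wp q x - Wp p x) -` C \<inter> space P) \<inter> space M = (\<lambda>\<omega>. w q \<omega> - w p \<omega>) -` C \<inter> space M"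
      using fC Wf pq by (auto simp: spP)
    have Aw: "f -` A \<inter> space M \<in> sets (wfilt M w p)"
      using measurable_sets[OF fad A] pq by simp
    have md: "\<And>S. S \<in> sets (Bsig t t) \<Longrightarrow> measure P S = measure M (f -` S \<inter> space M)"
      using measure_distr[OF fM] Pdef by simp
    have S1: "A \<inter> ((\<lambda>x. Wp q x - Wp p x) -` C \<inter> space P) \<in> sets (Bsig t t)" using AP DP by auto
    have "measure P (A \<inter> ((\<lambda>x. Wp q x - Wp p x) -` C \<inter> space P))
        = measure M ((f -` A \<inter> space M) \<inter> ((\<lambda>\<omega>. w q \<omega> - w p \<omega>) -` C \<inter> space M))"
      using md[OF S1] pre1 by simp
    also have "\<dots> = measure M (f -` A \<inter> space M) * measure M ((\<lambda>\<omega>. w q \<omega> - w p \<omega>) -` C \<inter> space M)"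
      by (rule bm_indep[OF BM pq Aw C])
    also have "\<dots> = measure P A * measure P ((\<lambda>x. Wp q x - Wp p x) -` C \<inter> space P)"
      using md[OF AP] md[OF DP] pre2 by simp
    finally show ?thesis .
  qed
  have dist: "distr P lborel (\<lambda>x. Wp q x - Wp p x) = density lborel (\<lambda>y. ennreal (normal_density 0 (sqrt (q - p)) y))"
    if pq: "0 \<le> p" "p < q" "q \<le> t" for p q
  proof -
    define r where "r i = (if i = 0 then p else q)" for i :: nat
    have "distributed M lborel (\<lambda>\<omega>. w (r (Suc 0)) \<omega> - w (r 0) \<omega>)
        (\<lambda>y. ennreal (normal_density 0 (sqrt (r (Suc 0) - r 0)) y))"
    proof -
      note H = BM[unfolded brownian_motion_def, THEN conjunct2, THEN conjunct2, THEN conjunct2,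
          THEN spec[of _ "Suc 0"], THEN spec[of _ r]]
      have cond: "0 \<le> r 0 \<and> r (Suc 0) \<le> t \<and> (\<forall>i<Suc 0. r i < r (Suc i))" using pq by (simp add: r_def)
      have "\<forall>i<Suc 0. distributed M lborel (\<lambda>\<omega>. w (r (Suc i)) \<omega> - w (r i) \<omega>)
          (\<lambda>y. ennreal (normal_density 0 (sqrt (r (Suc i) - r i)) y))"
        by (rule conjunct2[OF mp[OF H cond]])
      then show ?thesis by blast
    qed
    then have dw: "distr M lborel (\<lambda>\<omega>. w q \<omega> - w p \<omega>) = density lborel (\<lambda>y. ennreal (normal_density 0 (sqrt (q - p)) y))"
      by (simp add: r_def distributed_def)
    have D1: "(\<lambda>x. Wp q x - Wp p x) \<in> borel_measurable P" using WpP pq by auto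
    have Dm: "(\<lambda>x. Wp q x - Wp p x) \<in> measurable (Bsig t t) lborel"
      using D1 unfolding measurable_cong_sets[OF setsP refl, of borel] measurable_lborel1 .
    have "distr P lborel (\<lambda>x. Wp q x - Wp p x) = distr M lborel ((\<lambda>x. Wp q x - Wp p x) \<circ> f)"
      unfolding Pdef by (rule distr_distr[OF Dm fM])
    also have "\<dots> = distr M lborel (\<lambda>\<omega>. w q \<omega> - w p \<omega>)"
    proof (rule distr_cong)
      fix \<omega> assume "\<omega> \<in> space M"
      then show "((\<lambda>x. Wp q x - Wp p x) \<circ> f) \<omega> = w q \<omega> - w p \<omega>" using Wf pq by simp
    qed simp_all
    finally show ?thesis using dw by simp
  qed
  have Hb: "\<bar>H s x\<bar> \<le> B / e" if "s \<in> {0..t}" "x \<in> space P" for s x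
  proof -
    have "(\<lambda>u. e * x u) \<in> Cpath t" using scale_Cpath that spP by auto
    then have "\<bar>h s (\<lambda>u. e * x u) \<beta>\<bar> \<le> B" using hB that \<beta> by auto
    then show ?thesis using e by (simp add: H_def scaled_def divide_right_mono)
  qed
  have Hm: "(\<lambda>(x,s). if s \<in> {0..t} then H s x else 0) \<in> borel_measurable (P \<Otimes>\<^sub>M lborel)"
  proof -
    have "(\<lambda>(u,x). H u x) \<in> borel_measurable (restrict_space borel {0..t} \<Otimes>\<^sub>M Bsig t t)"
      unfolding H_def by (rule scaled_na) (use h_na \<beta> t0 in \<open>auto simp: nonanticipative_def\<close>)
    from restr_if_meas[OF this]
    show ?thesis by (simp add: setsP cong: measurable_cong_sets sets_pair_measure_cong)
  qed
  have Zm: "Z \<in> borel_measurable P" using Z_ito unfolding is_ito_integral_def P_def by auto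
  have Jm: "J \<in> borel_measurable P" unfolding J_def[abs_def] by (rule lint_sq_meas[OF Hm])
  have ito: "is_ito_integral P (Bsig t) t Wp H Z" using Z_ito by (simp add: P_def Wp_def b_def H_def)
  have main: "(\<integral>\<^sup>+x. ennreal (exp ((2*e) * Z x - (2*e)\<^sup>2 * J x)) \<partial>P) \<le> 1"
    unfolding J_def
  proof (rule ito_exp_bound[OF PP _ _ _ Wm ind dist ito t0 Hb Hm])
    show "\<And>s. 0 \<le> s \<Longrightarrow> s \<le> t \<Longrightarrow> space (Bsig t s) = space P" using spP by simp
    show "\<And>s s'. 0 \<le> s \<Longrightarrow> s \<le> s' \<Longrightarrow> s' \<le> t \<Longrightarrow> sets (Bsig t s) \<subseteq> sets (Bsig t s')" by (rule Bsig_mono)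
    show "sets (Bsig t t) \<subseteq> sets P" using setsP by simp
  qed (auto simp: atLeastAtMost_iff)
  have Jb: "0 \<le> J x \<and> e\<^sup>2 * J x \<le> t * B\<^sup>2" if x: "x \<in> space P" for x
  proof -
    have lb: "0 \<le> J x \<and> J x \<le> (B/e)\<^sup>2 * measure lborel {0..t}"
      unfolding J_def
    proof (rule lint_bound)
      show "{0..t} \<in> sets lborel" by simp
      show "emeasure lborel {0..t} < \<infinity>" using t0 by simp
      fix u assume u: "u \<in> {0..t}"
      have "\<bar>H u x\<bar> \<le> B / e" by (rule Hb[OF u x])
      then show "0 \<le> (H u x)\<^sup>2 \<and> (H u x)\<^sup>2 \<le> (B/e)\<^sup>2"
        by (metis abs_ge_zero power2_abs power_mono zero_le_power2)
    qed
    then have "e\<^sup>2 * J x \<le> e\<^sup>2 * ((B/e)\<^sup>2 * t)" using t0 by (intro mult_left_mono) auto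
    also have "\<dots> = t * B\<^sup>2" using e by (simp add: power_divide)
    finally show ?thesis using lb by simp
  qed
  have Dm: "(\<lambda>x. ennreal (exp (e * Z x - e\<^sup>2 / 2 * J x))) \<in> borel_measurable P"
    using Zm Jm by measurable
  then show "(\<lambda>x. ennreal (exp (e * Z x - e\<^sup>2 / 2 * (LINT u:{0..t}|lborel. (scaled e h u x \<beta>)\<^sup>2))))
            \<in> borel_measurable (path_law M t X)"
    by (simp add: P_def J_def H_def)
  have "(\<integral>\<^sup>+x. ennreal (exp (e * Z x - e\<^sup>2 / 2 * J x)) ^ 2 \<partial>P)
      \<le> (\<integral>\<^sup>+x. ennreal (exp (3 * t * B\<^sup>2)) * ennreal (exp ((2*e) * Z x - (2*e)\<^sup>2 * J x)) \<partial>P)"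
  proof (rule nn_integral_mono)
    fix x assume x: "x \<in> space P"
    have "exp (e * Z x - e\<^sup>2 / 2 * J x) ^ 2 = exp (2 * (e * Z x - e\<^sup>2 / 2 * J x))"
      by (simp add: power2_eq_square exp_add[symmetric] algebra_simps)
    also have "\<dots> = exp (3 * (e\<^sup>2 * J x)) * exp ((2*e) * Z x - (2*e)\<^sup>2 * J x)"
      by (simp add: exp_add[symmetric] power2_eq_square algebra_simps)
    also have "\<dots> \<le> exp (3 * t * B\<^sup>2) * exp ((2*e) * Z x - (2*e)\<^sup>2 * J x)"
      using Jb[OF x] by (intro mult_right_mono) auto
    finally have ineq: "exp (e * Z x - e\<^sup>2 / 2 * J x) ^ 2 \<le> exp (3 * t * B\<^sup>2) * exp ((2*e) * Z x - (2*e)\<^sup>2 * J x)" .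
    have e1: "ennreal (exp (e * Z x - e\<^sup>2 / 2 * J x)) ^ 2 = ennreal (exp (e * Z x - e\<^sup>2 / 2 * J x) ^ 2)"
      by (rule ennreal_power) simp
    have e2: "ennreal (exp (3 * t * B\<^sup>2)) * ennreal (exp ((2*e) * Z x - (2*e)\<^sup>2 * J x))
        = ennreal (exp (3 * t * B\<^sup>2) * exp ((2*e) * Z x - (2*e)\<^sup>2 * J x))"
      by (rule ennreal_mult[symmetric]) auto
    show "ennreal (exp (e * Z x - e\<^sup>2 / 2 * J x)) ^ 2 \<le> ennreal (exp (3 * t * B\<^sup>2)) * ennreal (exp ((2*e) * Z x - (2*e)\<^sup>2 * J x))"
      unfolding e1 e2 by (rule ennreal_leI[OF ineq])
  qed
  also have "\<dots> = ennreal (exp (3 * t * B\<^sup>2)) * (\<integral>\<^sup>+x. ennreal (exp ((2*e) * Z x - (2*e)\<^sup>2 * J x)) \<partial>P)"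
    by (rule nn_integral_cmult) (use Zm Jm in measurable)
  also have "\<dots> \<le> ennreal (exp (3 * t * B\<^sup>2)) * 1" by (intro mult_left_mono main) auto
  finally show "(\<integral>\<^sup>+x. ennreal (exp (e * Z x - e\<^sup>2 / 2 * (LINT u:{0..t}|lborel. (scaled e h u x \<beta>)\<^sup>2))) ^ 2 \<partial>path_law M t X)
          \<le> ennreal (exp (3 * t * B\<^sup>2))"
    by (simp add: P_def J_def H_def)
qed


lemma contig_bound:
  fixes d :: "'x \<Rightarrow> real"
  assumes dm: "(\<lambda>x. ennreal (d x)) \<in> borel_measurable P" and A: "A \<in> sets P" and c: "c > 0"
    and d0: "\<And>x. 0 \<le> d x"
    and K: "(\<integral>\<^sup>+x. ennreal (d x) ^ 2 \<partial>P) \<le> K"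
  shows "(\<integral>\<^sup>+x. ennreal (d x) * indicator A x \<partial>P) \<le> ennreal c * emeasure P A + ennreal (1/c) * K"
proof -
  have "(\<integral>\<^sup>+x. ennreal (d x) * indicator A x \<partial>P) \<le> (\<integral>\<^sup>+x. ennreal c * indicator A x + ennreal (1/c) * ennreal (d x) ^ 2 \<partial>P)"
  proof (rule nn_integral_mono)
    fix x
    show "ennreal (d x) * indicator A x \<le> ennreal c * indicator A x + ennreal (1/c) * ennreal (d x) ^ 2"
    proof (cases "x \<in> A")
      case True
      have r: "d x \<le> c + (1/c) * (d x)^2"
      proof (cases "d x \<le> c")
        case True then show ?thesis using c by (simp add: add_increasing2)
      next
        case False
        then have "d x * c \<le> d x * d x" using c d0[of x] by (intro mult_left_mono) auto
        then have "d x \<le> (1/c) * (d x)^2" using c by (simp add: field_simps power2_eq_square)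
        then show ?thesis using c by simp
      qed
      have "ennreal (d x) \<le> ennreal (c + (1/c) * (d x)^2)" by (rule ennreal_leI[OF r])
      also have "\<dots> = ennreal c + ennreal (1/c) * ennreal (d x) ^ 2"
      proof -
        have e1: "ennreal (c + (1/c) * (d x)^2) = ennreal c + ennreal ((1/c) * (d x)^2)"
          by (rule ennreal_plus) (use c in auto)
        have e2: "ennreal ((1/c) * (d x)^2) = ennreal (1/c) * ennreal ((d x)^2)"
          by (rule ennreal_mult) (use c in auto)
        have e3: "ennreal ((d x)^2) = ennreal (d x) ^ 2" by (rule ennreal_power[symmetric]) (rule d0)
        show ?thesis unfolding e1 e2 e3 ..
      qed
      finally show ?thesis using True by simp
    qed simp
  qed
  also have "\<dots> = ennreal c * emeasure P A + ennreal (1/c) * (\<integral>\<^sup>+x. ennreal (d x) ^ 2 \<partial>P)"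
    using dm A by (simp add: nn_integral_add nn_integral_cmult nn_integral_cmult_indicator)
  also have "\<dots> \<le> ennreal c * emeasure P A + ennreal (1/c) * K"
    by (intro add_left_mono mult_left_mono K) auto
  finally show ?thesis .
qed

lemma ennreal_pos_below:
  fixes a :: ennreal
  assumes "0 < a"
  shows "\<exists>\<delta>>0. ennreal \<delta> < a"
proof (cases "a = \<top>")
  case True then show ?thesis by (intro exI[of _ 1]) simp
next
  case False
  then obtain r where r: "a = ennreal r" "0 \<le> r" by (cases a) auto
  then have "0 < r" using assms by simp
  then show ?thesis using r by (intro exI[of _ "r/2"]) (simp add: ennreal_less_iff)
qed

theorem proposition2p1:
  fixes t L1 L2 :: real
    and \<A> K :: "'a::euclidean_space set"
    and a h :: "real \<Rightarrow> (real \<Rightarrow> real) \<Rightarrow> 'a \<Rightarrow> real"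
    and k :: "real \<Rightarrow> real"
    and Y0 :: "'a \<Rightarrow> real \<Rightarrow> real"
    and \<epsilon> :: "nat \<Rightarrow> real"
    and \<alpha> :: "nat \<Rightarrow> 'a"
    and M :: "'w measure"
    and w :: "real \<Rightarrow> 'w \<Rightarrow> real"
    and X :: "nat \<Rightarrow> real \<Rightarrow> 'w \<Rightarrow> real"
    and Z :: "nat \<Rightarrow> (real \<Rightarrow> real) \<Rightarrow> real"
  assumes t_pos: "t > 0"
    and A_open: "open \<A>"
    and a_na: "nonanticipative t \<A> a"
    and k_mono: "mono k" and k_rc: "\<And>u. continuous (at_right u) k"
    and k_bdd: "bounded (range k)" and k_nonneg: "\<And>u. k u \<ge> 0"
    and a_lip: "\<And>s x1 x2 \<beta>. s \<in> {0..t} \<Longrightarrow> x1 \<in> Cpath t \<Longrightarrow> x2 \<in> Cpath t \<Longrightarrow> \<beta> \<in> \<A> \<Longrightarrow>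
        \<bar>a s x1 \<beta> - a s x2 \<beta>\<bar>
          \<le> L1 * (LINT u:{0..s}|interval_measure k. \<bar>x1 u - x2 u\<bar>) + L2 * \<bar>x1 s - x2 s\<bar>"
    and a_growth: "\<And>s x \<beta>. s \<in> {0..t} \<Longrightarrow> x \<in> Cpath t \<Longrightarrow> \<beta> \<in> \<A> \<Longrightarrow>
        \<bar>a s x \<beta>\<bar> \<le> L1 * (LINT u:{0..s}|interval_measure k. 1 + \<bar>x u\<bar>) + L2 * (1 + \<bar>x s\<bar>)"
    and Y0_sol: "\<And>\<beta>. \<beta> \<in> \<A> \<Longrightarrow> ode_solution t a \<beta> (Y0 \<beta>)"
    and K_compact: "compact K" and K_sub: "K \<subseteq> \<A>"
    and eps_pos: "\<And>n. \<epsilon> n > 0" and eps_dec: "decseq \<epsilon>" and eps_lim: "\<epsilon> \<longlonglongrightarrow> 0"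
    and alpha_K: "\<And>n. \<alpha> n \<in> K"
    and h_H: "classH t \<A> Y0 h"
    and BM: "brownian_motion M t w"
    and X_sol: "\<And>n. sde_solution M t (\<lambda>s x. scaled (\<epsilon> n) a s x (\<alpha> n)) w (X n)"
    and Z_ito: "\<And>n. is_ito_integral (path_law M t (X n)) (Bsig t) t
        (\<lambda>s x. x s - (LINT u:{0..s}|lborel. scaled (\<epsilon> n) a u x (\<alpha> n)))
        (\<lambda>s x. scaled (\<epsilon> n) h s x (\<alpha> n)) (Z n)"
  shows "contiguous
     (\<lambda>n. density (path_law M t (X n))
        (\<lambda>x. ennreal (exp (\<epsilon> n * Z n x
              - (\<epsilon> n)\<^sup>2 / 2 * (LINT u:{0..t}|lborel. (scaled (\<epsilon> n) h u x (\<alpha> n))\<^sup>2)))))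
     (\<lambda>n. path_law M t (X n))"
proof -
  obtain B where hB: "\<And>s x \<gamma>. s \<in> {0..t} \<Longrightarrow> x \<in> Cpath t \<Longrightarrow> \<gamma> \<in> \<A> \<Longrightarrow> \<bar>h s x \<gamma>\<bar> \<le> B"
    and h_na: "nonanticipative t \<A> h"
    using h_H unfolding classH_def by blast
  define P where "P n = path_law M t (X n)" for n
  define d where "d n x = exp (\<epsilon> n * Z n x - (\<epsilon> n)\<^sup>2 / 2 * (LINT u:{0..t}|lborel. (scaled (\<epsilon> n) h u x (\<alpha> n))\<^sup>2))" for n x
  define K0 where "K0 = exp (3 * t * B\<^sup>2)"
  have K0: "K0 > 0" by (simp add: K0_def)
  have pn: "(\<lambda>x. ennreal (d n x)) \<in> borel_measurable (P n) \<and> (\<integral>\<^sup>+x. ennreal (d n x) ^ 2 \<partial>P n) \<le> ennreal K0" for n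
  proof -
    have \<beta>: "\<alpha> n \<in> \<A>" using alpha_K K_sub by auto
    note r = per_n[OF t_pos a_na k_mono k_rc a_lip a_growth eps_pos[of n] \<beta> hB h_na BM X_sol[of n] Z_ito[of n]]
    show ?thesis using r by (simp add: P_def d_def K0_def)
  qed
  show ?thesis
    unfolding contiguous_def
  proof (intro allI impI)
    fix A :: "nat \<Rightarrow> (real \<Rightarrow> real) set"
    assume A: "\<forall>n. A n \<in> sets (path_law M t (X n))"
      and lim: "(\<lambda>n. emeasure (path_law M t (X n)) (A n)) \<longlonglongrightarrow> 0"
    have Qeq: "emeasure (density (P n) (\<lambda>x. ennreal (d n x))) (A n) = (\<integral>\<^sup>+x. ennreal (d n x) * indicator (A n) x \<partial>P n)" for n
      using pn[of n] A by (simp add: emeasure_density P_def)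
    have Qb: "emeasure (density (P n) (\<lambda>x. ennreal (d n x))) (A n) \<le> ennreal c * emeasure (P n) (A n) + ennreal (1/c) * ennreal K0"
      if c: "c > 0" for c n
      unfolding Qeq by (rule contig_bound) (use pn[of n] A c in \<open>auto simp: P_def d_def\<close>)
    have "(\<lambda>n. emeasure (density (P n) (\<lambda>x. ennreal (d n x))) (A n)) \<longlonglongrightarrow> 0"
    proof (rule order_tendstoI)
      fix a :: ennreal assume "a < 0" then show "eventually (\<lambda>n. a < emeasure (density (P n) (\<lambda>x. ennreal (d n x))) (A n)) sequentially"
        by simp
    next
      fix a :: ennreal assume a: "0 < a"
      obtain \<delta> where \<delta>: "\<delta> > 0" "ennreal \<delta> < a" using ennreal_pos_below[OF a] by blast
      define c where "c = 2 * K0 / \<delta>"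
      have c: "c > 0" using K0 \<delta> by (simp add: c_def)
      have ev: "eventually (\<lambda>n. emeasure (P n) (A n) < ennreal (\<delta> / (2 * c))) sequentially"
        using order_tendstoD(2)[OF lim, of "ennreal (\<delta> / (2 * c))"] \<delta> c by (simp add: P_def)
      show "eventually (\<lambda>n. emeasure (density (P n) (\<lambda>x. ennreal (d n x))) (A n) < a) sequentially"
        using ev
      proof eventually_elim
        case (elim n)
        have "emeasure (density (P n) (\<lambda>x. ennreal (d n x))) (A n) \<le> ennreal c * emeasure (P n) (A n) + ennreal (1/c) * ennreal K0"
          by (rule Qb[OF c])
        also have "\<dots> \<le> ennreal c * ennreal (\<delta> / (2 * c)) + ennreal (1/c) * ennreal K0"
          using elim by (intro add_right_mono mult_left_mono) auto
        also have "\<dots> = ennreal (\<delta>/2) + ennreal (\<delta>/2)"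
          using c \<delta> K0 by (simp add: ennreal_mult[symmetric] c_def field_simps)
        also have "\<dots> = ennreal \<delta>" using \<delta> by (simp add: ennreal_plus[symmetric])
        also have "\<dots> < a" by (rule \<delta>(2))
        finally show ?case .
      qed
    qed
    then show "(\<lambda>n. emeasure (density (path_law M t (X n))
        (\<lambda>x. ennreal (exp (\<epsilon> n * Z n x - (\<epsilon> n)\<^sup>2 / 2 * (LINT u:{0..t}|lborel. (scaled (\<epsilon> n) h u x (\<alpha> n))\<^sup>2))))) (A n)) \<longlonglongrightarrow> 0"
      by (simp add: P_def d_def)
  qed
qed


end
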